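(* Under the standing assumptions (A) below, the set $\Omega'=\{t\in[0,L]:\tau(t)\ne\pm\lambda\}\cup\Omega$ has finitely many connected components.
   Context: Standing assumptions (A): $n\ge2$, $L>0$, $\beta\colon[0,L]\to(0,\infty)$ of bounded variation with $1/\beta$ bounded; $\tau\in W^{1,\infty}((0,L);S^{n-1})$ with $k=\operatorname{ess\,sup}|\tau'|>0$; $\lambda\in S^{n-1}$ and $u\in W^{1,\infty}((0,L);\mathbb{R}^n)\setminus\{0\}$ such that $u'+(u\cdot\tau')\tau=\beta(\lambda-(\lambda\cdot\tau)\tau)$ and $|u|\tau'=ku$ a.e. in $(0,L)$; $f=k|u|$, which then satisfies $f'=\beta\,\lambda\cdot\tau'$ and $f(\tau''+k^2\tau)=\beta k^2\,\mathrm{proj}^\perp_{\tau,\tau'}(\lambda)$ weakly in $(0,L)$ (where $\mathrm{proj}^\perp_{V,W}$ is the orthogonal projection onto the orthogonal complement of $\mathrm{span}\{V,W\}$); $\Omega=\{t\in[0,L]:f(t)>0\}$ (open relative to $[0,L]$); and $\tau(t),\tau'(t),\lambda$ are linearly dependent for every $t\in\Omega$ (note $\tau'$ is continuous on $\Omega$). *)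

theory Defs
  imports "HOL-Analysis.Analysis" "HOL-Probability.Essential_Supremum"
begin

definition bounded_variation_on :: "(real \<Rightarrow> real) \<Rightarrow> real \<Rightarrow> real \<Rightarrow> bool" where
  "bounded_variation_on g a b \<longleftrightarrow>
     (\<exists>V. \<forall>xs. sorted xs \<and> set xs \<subseteq> {a..b} \<longrightarrow>
        (\<Sum>i<length xs - 1. \<bar>g (xs ! Suc i) - g (xs ! i)\<bar>) \<le> V)"

text \<open>Linear dependence of the three-element family (x, y, z) (as a family,
  so repetitions count as dependence).\<close>
definition lin_dep3 :: "'a::real_vector \<Rightarrow> 'a \<Rightarrow> 'a \<Rightarrow> bool" where
  "lin_dep3 x y z \<longleftrightarrow>
     (\<exists>a b c. (a, b, c) \<noteq> (0::real, 0::real, 0::real) \<and> a *\<^sub>R x + b *\<^sub>R y + c *\<^sub>R z = 0)"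

end

theory Submission
  imports Defs
begin

lemma mono_ae:
  fixes h :: "real \<Rightarrow> real"
  assumes ab: "a \<le> b" and lip: "C-lipschitz_on {a..b} h"
    and der: "AE t in lborel. t \<in> {a<..<b} \<longrightarrow> (\<exists>d\<ge>0. (h has_real_derivative d) (at t))"
  shows "h a \<le> h b"
proof (rule ccontr)
  assume "\<not> h a \<le> h b"
  hence lt: "h b < h a" by simp
  with ab have ab': "a < b" by (cases "a = b") auto
  define e where "e = (h a - h b) / (2*(b-a))"
  have e: "e > 0" using lt ab' by (simp add: e_def)
  define H where "H t = h t + e*t" for t
  have Hba: "H b < H a"
  proof -
    have "H b - H a = h b - h a + e*(b-a)" by (simp add: H_def algebra_simps)
    also have "e*(b-a) = (h a - h b)/2" using ab' by (simp add: e_def field_simps)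
    finally have "H b - H a = h b - h a + (h a - h b) / 2" .
    thus ?thesis using lt by argo
  qed
  obtain N where N: "{t \<in> space lborel. \<not>(t \<in> {a<..<b} \<longrightarrow> (\<exists>d\<ge>0. (h has_real_derivative d) (at t)))} \<subseteq> N"
    "N \<in> null_sets lborel"
    using der unfolding eventually_ae_filter by blast
  define S where "S = ({a..b} \<inter> N) \<union> {a,b}"
  have "negligible N" using N(2)
    using negligible_iff_null_sets null_sets_completionI by blast
  hence negS: "negligible S" unfolding S_def
    by (metis inf_le2 negligible_Un negligible_finite negligible_subset finite.emptyI finite.insertI)
  have C0: "C \<ge> 0" using lip lipschitz_on_nonneg by blast
  have lipH: "dist (H x) (H y) \<le> (C + e) * dist x y" if "x \<in> {a..b}" "y \<in> {a..b}" for x y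
  proof -
    have "dist (h x) (h y) \<le> C * dist x y" using lipschitz_onD[OF lip that] .
    hence "\<bar>h x - h y\<bar> \<le> C * \<bar>x - y\<bar>" by (simp add: dist_real_def)
    moreover have "\<bar>e*x - e*y\<bar> = e * \<bar>x - y\<bar>" using e by (simp add: abs_mult right_diff_distrib[symmetric])
    ultimately have "\<bar>H x - H y\<bar> \<le> C * \<bar>x - y\<bar> + e * \<bar>x - y\<bar>"
      unfolding H_def by (smt (verit))
    thus ?thesis by (simp add: dist_real_def algebra_simps)
  qed
  have "negligible (H ` S)"
  proof (rule negligible_locally_Lipschitz_image[OF _ negS])
    show "DIM(real) \<le> DIM(real)" by simp
  next
    fix x assume x: "x \<in> S"
    show "\<exists>T B. open T \<and> x \<in> T \<and> (\<forall>y\<in>S \<inter> T. norm (H y - H x) \<le> B * norm (y - x))"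
    proof (intro exI conjI)
      show "open UNIV" by simp
      show "x \<in> UNIV" by simp
      show "\<forall>y\<in>S \<inter> UNIV. norm (H y - H x) \<le> (C+e) * norm (y - x)"
      proof
        fix y assume "y \<in> S \<inter> UNIV"
        hence "y \<in> {a..b}" "x \<in> {a..b}" using x ab unfolding S_def by auto
        from lipH[OF this] show "norm (H y - H x) \<le> (C+e) * norm (y - x)"
          by (simp add: dist_norm)
      qed
    qed
  qed
  moreover have "\<not> negligible {H b<..<H a}"
    using Hba negligible_interval(2)[of "H b" "H a"] by (simp add: box_real)
  ultimately obtain y where y: "y \<in> {H b<..<H a}" "y \<notin> H ` S"
    by (meson negligible_subset subsetI)
  have contH: "continuous_on {a..b} H"
  proof -
    have "continuous_on {a..b} h" using lip by (rule lipschitz_on_continuous_on)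
    thus ?thesis unfolding H_def by (intro continuous_intros)
  qed
  define A where "A = {a..b} \<inter> H -` {y..}"
  have clA: "closed A" unfolding A_def
    by (rule continuous_closed_preimage[OF contH]) auto
  have aA: "a \<in> A" using y ab unfolding A_def by auto
  have bdd: "bdd_above A" unfolding A_def by (rule bdd_aboveI[of _ b]) auto
  define x where "x = Sup A"
  have xA: "x \<in> A" unfolding x_def using clA aA bdd closed_contains_Sup by blast
  hence xab: "x \<in> {a..b}" and Hx: "y \<le> H x" unfolding A_def by auto
  have right: "H t < y" if "t \<in> {a..b}" "x < t" for t
  proof (rule ccontr)
    assume "\<not> H t < y"
    hence "t \<in> A" using that unfolding A_def by auto
    hence "t \<le> x" unfolding x_def using bdd by (simp add: cSup_upper)
    with that show False by simp
  qed
  have xb: "x < b" using xab Hx Hba y by (cases "x = b") auto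
  have Hxy: "H x = y"
  proof (rule ccontr)
    assume "H x \<noteq> y"
    hence gt: "H x - y > 0" using Hx by simp
    from contH xab gt obtain d where d: "d > 0" "\<forall>x'\<in>{a..b}. dist x' x < d \<longrightarrow> dist (H x') (H x) < H x - y"
      unfolding continuous_on_iff by metis
    define t where "t = min b (x + d/2)"
    have t: "t \<in> {a..b}" "x < t" "dist t x < d" using xab xb d unfolding t_def by (auto simp: dist_real_def)
    hence "dist (H t) (H x) < H x - y" using d by auto
    hence "H t > y" by (simp add: dist_real_def)
    with right[OF t(1,2)] show False by simp
  qed
  hence "x \<notin> S" using y by auto
  hence xab': "x \<in> {a<..<b}" "x \<notin> N" using xab unfolding S_def by auto
  then obtain d where d: "d \<ge> 0" "(h has_real_derivative d) (at x)" using N(1) by auto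
  have "(H has_real_derivative d + e) (at x)" unfolding H_def
    using d(2) by (auto intro!: derivative_eq_intros)
  then obtain \<delta> where \<delta>: "\<delta> > 0" "\<forall>\<eta>>0. \<eta> < \<delta> \<longrightarrow> H x < H (x + \<eta>)"
    using DERIV_pos_inc_right d e by (metis add_nonneg_pos)
  define \<eta> where "\<eta> = min (\<delta>/2) ((b-x)/2)"
  have "\<eta> > 0" "\<eta> < \<delta>" using \<delta> xb by (auto simp: \<eta>_def)
  hence "H x < H (x + \<eta>)" using \<delta> by auto
  moreover have "\<eta> \<le> (b-x)/2" unfolding \<eta>_def by (rule min.cobounded2)
  hence "x + \<eta> \<in> {a..b}" "x < x + \<eta>" using xab xb \<open>\<eta> > 0\<close> by auto
  ultimately show False using right Hxy by fastforce
qed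

fun vr :: "(real \<Rightarrow> real) \<Rightarrow> real list \<Rightarrow> real" where
  "vr g (x#y#zs) = \<bar>g y - g x\<bar> + vr g (y#zs)"
| "vr g _ = 0"

lemma vr_sum: "vr g xs = (\<Sum>i<length xs - 1. \<bar>g (xs!Suc i) - g (xs!i)\<bar>)"
proof (induction g xs rule: vr.induct)
  case (1 g x y zs)
  have "(\<Sum>i<length (x#y#zs) - 1. \<bar>g ((x#y#zs)!Suc i) - g ((x#y#zs)!i)\<bar>)
      = (\<Sum>i<Suc (length zs). \<bar>g ((x#y#zs)!Suc i) - g ((x#y#zs)!i)\<bar>)" by simp
  also have "\<dots> = \<bar>g y - g x\<bar> + (\<Sum>i<length zs. \<bar>g ((y#zs)!Suc i) - g ((y#zs)!i)\<bar>)"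
    by (subst sum.lessThan_Suc_shift) simp
  finally show ?case using 1 by simp
qed auto

lemma vr_nonneg: "0 \<le> vr g xs"
  by (induction g xs rule: vr.induct) auto

lemma vr_cons_ge: "vr g ys \<le> vr g (v#ys)"
  by (cases ys) auto

lemma vr_append: "vr g xs + vr g ys \<le> vr g (xs @ ys)"
  by (induction g xs rule: vr.induct) (auto simp: vr_cons_ge)

lemma sorted_hd_le: "sorted xs \<Longrightarrow> xs \<noteq> [] \<Longrightarrow> y \<in> set xs \<Longrightarrow> hd xs \<le> y"
  by (cases xs) auto

lemma var_small_right:
  fixes g :: "real \<Rightarrow> real"
  assumes bnd: "\<forall>xs. sorted xs \<and> set xs \<subseteq> {c<..<e} \<longrightarrow> vr g xs \<le> V"
    and ce: "c < e" and eta: "\<eta> > 0"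
  shows "\<exists>\<delta>>0. \<delta> \<le> e - c \<and> (\<forall>xs. sorted xs \<and> set xs \<subseteq> {c<..<c+\<delta>} \<longrightarrow> vr g xs \<le> \<eta>)"
proof (rule ccontr)
  assume "\<not> ?thesis"
  hence neg: "\<forall>\<delta>>0. \<delta> \<le> e - c \<longrightarrow> (\<exists>xs. sorted xs \<and> set xs \<subseteq> {c<..<c+\<delta>} \<and> vr g xs > \<eta>)"
    by (auto simp: not_le)
  have claim: "\<forall>\<delta>. 0 < \<delta> \<and> \<delta> \<le> e - c \<longrightarrow> (\<exists>xs. sorted xs \<and> set xs \<subseteq> {c<..<c+\<delta>} \<and> vr g xs \<ge> real n * \<eta>)" for n
  proof (induction n)
    case 0
    show ?case by (intro allI impI exI[of _ "[]"]) auto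
  next
    case (Suc n)
    show ?case
    proof (intro allI impI)
      fix \<delta> assume d: "0 < \<delta> \<and> \<delta> \<le> e - c"
      then obtain xs1 where xs1: "sorted xs1" "set xs1 \<subseteq> {c<..<c+\<delta>}" "vr g xs1 > \<eta>"
        using neg by blast
      have ne: "xs1 \<noteq> []" using xs1(3) eta by auto
      define m where "m = hd xs1"
      have m: "m \<in> {c<..<c+\<delta>}" using ne xs1(2) unfolding m_def by (cases xs1) auto
      have mle: "\<forall>y\<in>set xs1. m \<le> y" using sorted_hd_le[OF xs1(1) ne] unfolding m_def by blast
      have "0 < (m - c)/2 \<and> (m-c)/2 \<le> e - c" using m d by auto
      then obtain xs2 where xs2: "sorted xs2" "set xs2 \<subseteq> {c<..<c+(m-c)/2}" "vr g xs2 \<ge> real n * \<eta>"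
        using Suc.IH by blast
      have lt: "\<forall>x\<in>set xs2. \<forall>y\<in>set xs1. x \<le> y"
      proof (intro ballI)
        fix x y assume "x \<in> set xs2" "y \<in> set xs1"
        hence "x < c + (m-c)/2" "m \<le> y" using xs2(2) mle by auto
        moreover have "c < m" using m by simp
        ultimately show "x \<le> y" by argo
      qed
      have "sorted (xs2 @ xs1)" using xs1(1) xs2(1) lt by (simp add: sorted_append)
      moreover have "c + (m-c)/2 \<le> c + \<delta>" using m by simp
      hence "{c<..<c + (m - c) / 2} \<subseteq> {c<..<c+\<delta>}" by (auto simp: field_simps)
      hence "set (xs2 @ xs1) \<subseteq> {c<..<c+\<delta>}" using xs1(2) xs2(2) by auto
      moreover have "vr g (xs2 @ xs1) \<ge> real (Suc n) * \<eta>"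
        using vr_append[of g xs2 xs1] xs1(3) xs2(3) by (simp add: algebra_simps)
      ultimately show "\<exists>xs. sorted xs \<and> set xs \<subseteq> {c<..<c+\<delta>} \<and> vr g xs \<ge> real (Suc n) * \<eta>"
        by blast
    qed
  qed
  obtain n :: nat where n: "V / \<eta> < real n" using reals_Archimedean2 by blast
  obtain xs where xs: "sorted xs" "set xs \<subseteq> {c<..<c+(e-c)}" "vr g xs \<ge> real n * \<eta>"
    using claim[of n, rule_format, of "e-c"] ce by auto
  have "vr g xs \<le> V" using bnd xs by auto
  moreover have "V < real n * \<eta>" using n eta by (simp add: field_simps)
  ultimately show False using xs(3) by simp
qed

lemma abel:
  fixes b h :: "nat \<Rightarrow> real"
  assumes "\<forall>i\<le>Suc n. 0 \<le> h i \<and> h i \<le> M"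
  shows "b n * h (Suc n) - b 0 * h 0 - M * (\<Sum>i<n. \<bar>b (Suc i) - b i\<bar>) \<le> (\<Sum>i<Suc n. b i * (h (Suc i) - h i))"
  using assms
proof (induction n)
  case 0
  then show ?case by (simp add: algebra_simps)
next
  case (Suc n)
  have IH: "b n * h (Suc n) - b 0 * h 0 - M * (\<Sum>i<n. \<bar>b (Suc i) - b i\<bar>) \<le> (\<Sum>i<Suc n. b i * (h (Suc i) - h i))"
    using Suc by auto
  have hb: "0 \<le> h (Suc n)" "h (Suc n) \<le> M" using Suc.prems by auto
  have "(b (Suc n) - b n) * h (Suc n) \<le> \<bar>b (Suc n) - b n\<bar> * M"
  proof -
    have "(b (Suc n) - b n) * h (Suc n) \<le> \<bar>b (Suc n) - b n\<bar> * h (Suc n)"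
      using hb by (intro mult_right_mono) auto
    also have "\<dots> \<le> \<bar>b (Suc n) - b n\<bar> * M" using hb by (intro mult_left_mono) auto
    finally show ?thesis .
  qed
  then show ?case using IH by (simp add: algebra_simps)
qed

lemma vr_pairs:
  fixes p q s :: "nat \<Rightarrow> real"
  assumes pq: "\<forall>i<n. s i < p i \<and> p i \<le> q i \<and> q i < s (Suc i)" and ms: "mono s"
  shows "sorted (concat (map (\<lambda>i. [p i, q i]) [0..<n]))
     \<and> (\<Sum>i<n. \<bar>g (q i) - g (p i)\<bar>) \<le> vr g (concat (map (\<lambda>i. [p i, q i]) [0..<n]))"
  using pq
proof (induction n)
  case 0
  then show ?case by simp
next
  case (Suc n)
  have IH: "sorted (concat (map (\<lambda>i. [p i, q i]) [0..<n]))
     \<and> (\<Sum>i<n. \<bar>g (q i) - g (p i)\<bar>) \<le> vr g (concat (map (\<lambda>i. [p i, q i]) [0..<n]))"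
    using Suc by auto
  have pn: "s n < p n" "p n \<le> q n" using Suc.prems by auto
  have le: "x \<le> p n" if "x \<in> set (concat (map (\<lambda>i. [p i, q i]) [0..<n]))" for x
  proof -
    from that obtain j where j: "j < n" "x = p j \<or> x = q j" by auto
    have "p j \<le> q j" "q j < s (Suc j)" using Suc.prems j by auto
    moreover have "s (Suc j) \<le> s n" using ms j by (simp add: monoD)
    ultimately show ?thesis using j pn by auto
  qed
  have eq: "concat (map (\<lambda>i. [p i, q i]) [0..<Suc n]) = concat (map (\<lambda>i. [p i, q i]) [0..<n]) @ [p n, q n]"
    by simp
  define L where "L = concat (map (\<lambda>i. [p i, q i]) [0..<n])"
  have A: "\<forall>x\<in>set L. \<forall>y\<in>set [p n, q n]. x \<le> y"
    using le pn unfolding L_def by force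
  show ?case unfolding eq
  proof
    show "sorted (concat (map (\<lambda>i. [p i, q i]) [0..<n]) @ [p n, q n])"
      using IH A pn sorted_append[of L "[p n, q n]"] unfolding L_def[symmetric] by simp
    show "(\<Sum>i<Suc n. \<bar>g (q i) - g (p i)\<bar>) \<le> vr g (concat (map (\<lambda>i. [p i, q i]) [0..<n]) @ [p n, q n])"
      using IH vr_append[of g "concat (map (\<lambda>i. [p i, q i]) [0..<n])" "[p n, q n]"] by simp
  qed
qed

lemma sorted_map_upt: "mono (m::nat\<Rightarrow>real) \<Longrightarrow> sorted (map m [0..<N])"
  by (auto simp: sorted_iff_nth_mono monoD)

lemma block:
  fixes F G b :: "real \<Rightarrow> real"
  assumes ce: "c < e" and lipF: "CF-lipschitz_on {c..e} F" and lipG: "CG-lipschitz_on {c..e} G"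
    and der: "AE t in lborel. t \<in> {c<..<e} \<longrightarrow> (\<exists>d. (G has_real_derivative d) (at t) \<and> (F has_real_derivative b t * d) (at t) \<and> \<bar>d\<bar> \<le> K)"
    and Fc: "F c = 0" and Fnn: "\<forall>t\<in>{c..e}. 0 \<le> F t" and Gle: "\<forall>t\<in>{c..e}. G t \<le> G c"
    and blow: "\<forall>t\<in>{c<..<e}. \<beta>0 \<le> b t" and bbd: "\<forall>t\<in>{c<..<e}. \<bar>b t\<bar> \<le> Bb"
    and var: "\<forall>xs. sorted xs \<and> set xs \<subseteq> {c<..<e} \<longrightarrow> vr b xs \<le> W" and W: "W < \<beta>0" and K: "0 \<le> K"
  shows "\<forall>t\<in>{c..e}. G t = G c"
proof (rule ccontr)
  assume "\<not> ?thesis"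
  then obtain t1 where t1: "t1 \<in> {c..e}" "G t1 \<noteq> G c" by auto
  have contG: "continuous_on {c..e} G" using lipG by (rule lipschitz_on_continuous_on)
  obtain t0 where t0: "t0 \<in> {c..e}" "\<forall>t\<in>{c..e}. G t0 \<le> G t"
    using continuous_attains_inf[OF compact_Icc _ contG] ce by fastforce
  define M where "M = G c - G t0"
  have Mpos: "M > 0" using t0 t1 Gle unfolding M_def by fastforce
  have ct0: "c < t0" using t0 Mpos unfolding M_def by (cases "t0 = c") auto
  have t0e: "t0 \<le> e" using t0 by auto
  have hb: "0 \<le> G c - G t \<and> G c - G t \<le> M" if "t \<in> {c..e}" for t
    using Gle t0 that unfolding M_def by auto
  have W0: "0 \<le> W" using var[rule_format, of "[]"] by simp
  have bW: "\<beta>0 - W > 0" using W by simp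
  obtain N :: nat where N: "K*(t0-c)*(W+1)/((\<beta>0-W)*M) < real N" using reals_Archimedean2 by blast
  have Npos: "N > 0"
  proof -
    have "0 \<le> K*(t0-c)*(W+1)/((\<beta>0-W)*M)" using K ct0 W0 bW Mpos by simp
    thus ?thesis using N by (cases N) auto
  qed
  then obtain n' where n': "N = Suc n'" by (cases N) auto
  define \<Delta> where "\<Delta> = (t0 - c)/real N"
  have \<Delta>: "\<Delta> > 0" using ct0 Npos by (simp add: \<Delta>_def)
  define s where "s i = c + real i * \<Delta>" for i
  define m where "m i = c + (real i + 1/2) * \<Delta>" for i
  have sN: "s N = t0" using Npos by (simp add: s_def \<Delta>_def)
  have s0: "s 0 = c" by (simp add: s_def)
  have ms: "mono s" unfolding s_def using \<Delta> by (intro monoI) (simp add: mult_right_mono)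
  have mm: "mono m" unfolding m_def using \<Delta> by (intro monoI) (simp add: mult_right_mono)
  have sm: "s i < m i" "m i < s (Suc i)" for i
    using \<Delta> by (simp_all add: s_def m_def algebra_simps)
  have sS: "s (Suc i) - s i = \<Delta>" for i by (simp add: s_def algebra_simps)
  have sin: "c \<le> s i" for i using ms s0 by (metis le0 monoD)
  have sinN: "s i \<le> t0" if "i \<le> N" for i using ms sN that by (metis monoD)
  have sub: "{s i<..<s (Suc i)} \<subseteq> {c<..<e}" if "i < N" for i
    using sin[of i] sinN[of "Suc i"] that t0e by auto
  have mce: "m i \<in> {c<..<e}" if "i < N" for i using sub[OF that] sm[of i] by auto
  define D where "D i = Sup ((\<lambda>t. \<bar>b t - b (m i)\<bar>) ` {s i<..<s (Suc i)})" for i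
  have bddD: "bdd_above ((\<lambda>t. \<bar>b t - b (m i)\<bar>) ` {s i<..<s (Suc i)})" if "i < N" for i
  proof (rule bdd_aboveI2)
    fix t assume "t \<in> {s i<..<s (Suc i)}"
    hence "\<bar>b t\<bar> \<le> Bb" "\<bar>b (m i)\<bar> \<le> Bb" using bbd sub[OF that] mce[OF that] by auto
    thus "\<bar>b t - b (m i)\<bar> \<le> 2*Bb" by linarith
  qed
  have neD: "{s i<..<s (Suc i)} \<noteq> {}" for i using sm[of i] by auto
  have Dup: "\<bar>b t - b (m i)\<bar> \<le> D i" if "i < N" "t \<in> {s i<..<s (Suc i)}" for i t
    unfolding D_def using bddD[OF that(1)] that(2) by (auto intro: cSup_upper)
  have lipall: "\<exists>C. C-lipschitz_on {c..e} (\<lambda>t. a * G t + d * t - F t)" for a d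
  proof -
    have l1: "(\<bar>a\<bar>*CG)-lipschitz_on {c..e} (\<lambda>t. a * G t)" by (rule lipschitz_on_cmult_real[OF lipG])
    have l2: "(\<bar>d\<bar>*1)-lipschitz_on {c..e} (\<lambda>t. d * t)" by (rule lipschitz_on_cmult_real[OF lipschitz_on_id])
    show ?thesis using lipschitz_on_diff[OF lipschitz_on_add[OF l1 l2] lipF] by blast
  qed
  have step: "F (s (Suc i)) - F (s i) \<le> b (m i) * (G (s (Suc i)) - G (s i)) + D i * K * \<Delta>"
    if i: "i < N" for i
  proof -
    define h where "h t = b (m i) * G t + (D i * K) * t - F t" for t
    obtain C where C: "C-lipschitz_on {c..e} h" using lipall unfolding h_def by blast
    have "{s i..s (Suc i)} \<subseteq> {c..e}" using sin[of i] sinN[of "Suc i"] that t0e by auto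
    hence C': "C-lipschitz_on {s i..s (Suc i)} h" using C lipschitz_on_subset by blast
    have "AE t in lborel. t \<in> {s i<..<s (Suc i)} \<longrightarrow> (\<exists>d\<ge>0. (h has_real_derivative d) (at t))"
      using der
    proof (rule eventually_mono)
      fix t assume H: "t \<in> {c<..<e} \<longrightarrow> (\<exists>d. (G has_real_derivative d) (at t) \<and> (F has_real_derivative b t * d) (at t) \<and> \<bar>d\<bar> \<le> K)"
      show "t \<in> {s i<..<s (Suc i)} \<longrightarrow> (\<exists>d\<ge>0. (h has_real_derivative d) (at t))"
      proof
        assume tin: "t \<in> {s i<..<s (Suc i)}"
        then obtain d where d: "(G has_real_derivative d) (at t)" "(F has_real_derivative b t * d) (at t)" "\<bar>d\<bar> \<le> K"
          using H sub[OF i] by auto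
        have "(h has_real_derivative b (m i) * d + D i * K - b t * d) (at t)"
          unfolding h_def using d(1,2) by (auto intro!: derivative_eq_intros)
        moreover have "(b t - b (m i)) * d \<le> D i * K"
        proof -
          have "(b t - b (m i)) * d \<le> \<bar>b t - b (m i)\<bar> * \<bar>d\<bar>" by (simp add: abs_mult[symmetric])
          also have "\<dots> \<le> D i * K"
            using Dup[OF i tin] d(3) by (intro mult_mono) auto
          finally show ?thesis .
        qed
        ultimately show "\<exists>d\<ge>0. (h has_real_derivative d) (at t)"
          by (intro exI[of _ "b (m i) * d + D i * K - b t * d"]) (auto simp: algebra_simps)
      qed
    qed
    from mono_ae[OF _ C' this] have "h (s i) \<le> h (s (Suc i))" using sm[of i] by simp
    hence "F (s (Suc i)) - F (s i) \<le> b (m i) * (G (s (Suc i)) - G (s i)) + D i * K * (s (Suc i) - s i)"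
      unfolding h_def by (simp add: algebra_simps)
    thus ?thesis using sS by simp
  qed
  have "F t0 - F c = (\<Sum>i<N. F (s (Suc i)) - F (s i))"
    using sum_lessThan_telescope[of "\<lambda>i. F (s i)" N] sN s0 by simp
  also have "\<dots> \<le> (\<Sum>i<N. b (m i) * (G (s (Suc i)) - G (s i)) + D i * K * \<Delta>)"
    by (rule sum_mono) (use step in auto)
  also have "\<dots> = (\<Sum>i<N. b (m i) * (G (s (Suc i)) - G (s i))) + (\<Sum>i<N. D i) * K * \<Delta>"
    by (simp add: sum.distrib sum_distrib_right)
  finally have est: "F t0 \<le> (\<Sum>i<N. b (m i) * (G (s (Suc i)) - G (s i))) + (\<Sum>i<N. D i) * K * \<Delta>"
    using Fc by simp
  define hh where "hh i = G c - G (s i)" for i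
  have hhb: "\<forall>i\<le>Suc n'. 0 \<le> hh i \<and> hh i \<le> M"
  proof (intro allI impI)
    fix i assume "i \<le> Suc n'"
    hence "s i \<in> {c..e}" using sin[of i] sinN[of i] n' t0e by auto
    thus "0 \<le> hh i \<and> hh i \<le> M" unfolding hh_def using hb by blast
  qed
  have ab: "b (m n') * hh (Suc n') - b (m 0) * hh 0 - M * (\<Sum>i<n'. \<bar>b (m (Suc i)) - b (m i)\<bar>)
      \<le> (\<Sum>i<Suc n'. b (m i) * (hh (Suc i) - hh i))"
    by (rule abel[OF hhb])
  have hh0: "hh 0 = 0" using s0 by (simp add: hh_def)
  have hhN: "hh (Suc n') = M" using sN n' by (simp add: hh_def M_def)
  have vsum: "(\<Sum>i<n'. \<bar>b (m (Suc i)) - b (m i)\<bar>) = vr b (map m [0..<Suc n'])"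
    unfolding vr_sum by (intro sum.cong) (auto simp del: upt_Suc simp: nth_append)
  have "set (map m [0..<Suc n']) \<subseteq> {c<..<e}" using mce n' by auto
  hence "vr b (map m [0..<Suc n']) \<le> W" using var sorted_map_upt[OF mm] by blast
  hence vW: "(\<Sum>i<n'. \<bar>b (m (Suc i)) - b (m i)\<bar>) \<le> W" using vsum by simp
  have bmn: "\<beta>0 \<le> b (m n')" using blow mce[of n'] n' by auto
  have "(\<Sum>i<N. b (m i) * (G (s (Suc i)) - G (s i))) = - (\<Sum>i<Suc n'. b (m i) * (hh (Suc i) - hh i))"
    unfolding n' hh_def sum_negf[symmetric] by (intro sum.cong) (auto simp: algebra_simps)
  also have "\<dots> \<le> - (b (m n') * M - M * W)"
  proof -
    have "M * (\<Sum>i<n'. \<bar>b (m (Suc i)) - b (m i)\<bar>) \<le> M * W" using vW Mpos by (intro mult_left_mono) auto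
    moreover have "b (m n') * M - M * (\<Sum>i<n'. \<bar>b (m (Suc i)) - b (m i)\<bar>) \<le> (\<Sum>i<Suc n'. b (m i) * (hh (Suc i) - hh i))"
      using ab hh0 hhN by simp
    ultimately show ?thesis by linarith
  qed
  also have "\<dots> \<le> - (\<beta>0 - W) * M"
    using bmn Mpos by (simp add: algebra_simps mult_right_mono)
  finally have part1: "(\<Sum>i<N. b (m i) * (G (s (Suc i)) - G (s i))) \<le> - (\<beta>0 - W) * M" .
  have "\<forall>i. \<exists>x. i < N \<longrightarrow> (x \<in> {s i<..<s (Suc i)} \<and> D i - 1/real N < \<bar>b x - b (m i)\<bar>)"
  proof (intro allI)
    fix i
    show "\<exists>x. i < N \<longrightarrow> (x \<in> {s i<..<s (Suc i)} \<and> D i - 1/real N < \<bar>b x - b (m i)\<bar>)"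
    proof (cases "i < N")
      case True
      have "D i - 1/real N < Sup ((\<lambda>t. \<bar>b t - b (m i)\<bar>) ` {s i<..<s (Suc i)})"
        using Npos unfolding D_def by simp
      then obtain y where y: "y \<in> (\<lambda>t. \<bar>b t - b (m i)\<bar>) ` {s i<..<s (Suc i)}" "D i - 1/real N < y"
        using less_cSupE neD[of i] by blast
      then obtain t where "t \<in> {s i<..<s (Suc i)}" "y = \<bar>b t - b (m i)\<bar>" by blast
      thus ?thesis using y(2) by blast
    qed simp
  qed
  then obtain x where x: "\<forall>i<N. x i \<in> {s i<..<s (Suc i)} \<and> D i - 1/real N < \<bar>b (x i) - b (m i)\<bar>"
    using choice[of "\<lambda>i x. i < N \<longrightarrow> (x \<in> {s i<..<s (Suc i)} \<and> D i - 1/real N < \<bar>b x - b (m i)\<bar>)"] by blast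
  define p where "p i = min (x i) (m i)" for i
  define q where "q i = max (x i) (m i)" for i
  have pq: "\<forall>i<N. s i < p i \<and> p i \<le> q i \<and> q i < s (Suc i)"
    using x sm unfolding p_def q_def by auto
  from vr_pairs[OF pq ms, of b]
  have sp: "sorted (concat (map (\<lambda>i. [p i, q i]) [0..<N]))"
    and sp2: "(\<Sum>i<N. \<bar>b (q i) - b (p i)\<bar>) \<le> vr b (concat (map (\<lambda>i. [p i, q i]) [0..<N]))" by auto
  have "set (concat (map (\<lambda>i. [p i, q i]) [0..<N])) \<subseteq> {c<..<e}"
  proof
    fix y assume "y \<in> set (concat (map (\<lambda>i. [p i, q i]) [0..<N]))"
    then obtain i where "i < N" "y = p i \<or> y = q i" by auto
    thus "y \<in> {c<..<e}" using pq sub by fastforce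
  qed
  hence "vr b (concat (map (\<lambda>i. [p i, q i]) [0..<N])) \<le> W" using var sp by auto
  moreover have "(\<Sum>i<N. \<bar>b (q i) - b (p i)\<bar>) = (\<Sum>i<N. \<bar>b (x i) - b (m i)\<bar>)"
    by (intro sum.cong) (auto simp: p_def q_def min_def max_def abs_minus_commute)
  ultimately have xsum: "(\<Sum>i<N. \<bar>b (x i) - b (m i)\<bar>) \<le> W" using sp2 by simp
  have "(\<Sum>i<N. D i) \<le> (\<Sum>i<N. \<bar>b (x i) - b (m i)\<bar> + 1/real N)"
    by (rule sum_mono) (use x in fastforce)
  also have "\<dots> = (\<Sum>i<N. \<bar>b (x i) - b (m i)\<bar>) + 1" using Npos by (simp add: sum.distrib)
  finally have Dsum: "(\<Sum>i<N. D i) \<le> W + 1" using xsum by simp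
  have "(\<Sum>i<N. D i) * K * \<Delta> \<le> (W + 1) * K * \<Delta>"
    using Dsum K \<Delta> by (intro mult_right_mono) auto
  also have "\<dots> = K*(t0-c)*(W+1)/real N" by (simp add: \<Delta>_def)
  also have "\<dots> < (\<beta>0-W)*M"
    using N Npos bW Mpos by (simp add: field_simps)
  finally have part2: "(\<Sum>i<N. D i) * K * \<Delta> < (\<beta>0-W)*M" .
  have "0 \<le> F t0" using Fnn t0 by auto
  with est part1 part2 show False by linarith
qed

lemma vd_inner_const:
  fixes f :: "real \<Rightarrow> 'a::real_inner"
  shows "(f has_vector_derivative f') (at t) \<Longrightarrow> ((\<lambda>s. c \<bullet> f s) has_real_derivative (c \<bullet> f')) (at t)"
  by (auto simp: has_field_derivative_def has_vector_derivative_def algebra_simps intro!: derivative_eq_intros)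

lemma vd_norm:
  fixes f :: "real \<Rightarrow> 'a::real_inner"
  assumes "(f has_vector_derivative f') (at t)" "f t \<noteq> 0"
  shows "((\<lambda>s. norm (f s)) has_real_derivative (f' \<bullet> sgn (f t))) (at t)"
proof -
  have "((\<lambda>s. norm (f s)) has_derivative (\<lambda>h. (h *\<^sub>R f') \<bullet> sgn (f t))) (at t)"
    using has_derivative_compose[OF assms(1)[unfolded has_vector_derivative_def] has_derivative_norm[OF assms(2)]]
    by (simp add: o_def)
  moreover have "(\<lambda>h. (h *\<^sub>R f') \<bullet> sgn (f t)) = (*) (f' \<bullet> sgn (f t))" by (rule ext) simp
  ultimately show ?thesis by (simp add: has_field_derivative_def)
qed

lemma vd_norm0:
  fixes f :: "real \<Rightarrow> 'a::real_normed_vector"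
  assumes "(f has_vector_derivative 0) (at t)" "f t = 0"
  shows "((\<lambda>s. norm (f s)) has_real_derivative 0) (at t)"
  using assms unfolding has_field_derivative_def has_vector_derivative_def has_derivative_iff_norm
  by (simp add: bounded_linear_mult_right)

lemma pointwise:
  fixes tau u :: "real \<Rightarrow> 'a::real_inner" and T U lam :: 'a
  assumes t: "0 < t" "t < L"
    and dt: "(tau has_vector_derivative T) (at t)"
    and du: "(u has_vector_derivative U) (at t)"
    and o1: "U + (u t \<bullet> T) *\<^sub>R tau t = bt *\<^sub>R (lam - (lam \<bullet> tau t) *\<^sub>R tau t)"
    and o2: "norm (u t) *\<^sub>R T = k *\<^sub>R u t"
    and Tk: "norm T \<le> k" and k: "k > 0" and bt: "bt > 0" and lam: "norm lam = 1"
    and sph: "\<forall>s\<in>{0..L}. norm (tau s) = 1"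
    and dep: "u t \<noteq> 0 \<Longrightarrow> (\<exists>a b c. (a, b, c) \<noteq> (0::real, 0::real, 0::real) \<and> a *\<^sub>R tau t + b *\<^sub>R T + c *\<^sub>R lam = 0)"
    and lp: "u t = 0 \<Longrightarrow> t islimpt {s. u s = 0}"
  shows "((\<lambda>s. lam \<bullet> tau s) has_real_derivative lam \<bullet> T) (at t)"
    and "((\<lambda>s. k * norm (u s)) has_real_derivative bt * (lam \<bullet> T)) (at t)"
    and "\<bar>lam \<bullet> T\<bar> \<le> k"
    and "(lam \<bullet> T)^2 = k^2 * (1 - (lam \<bullet> tau t)^2)"
    and "u t \<noteq> 0 \<Longrightarrow> T = (k / norm (u t)) *\<^sub>R u t"
proof -
  show dg: "((\<lambda>s. lam \<bullet> tau s) has_real_derivative lam \<bullet> T) (at t)"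
    by (rule vd_inner_const[OF dt])
  show "\<bar>lam \<bullet> T\<bar> \<le> k"
    using Cauchy_Schwarz_ineq2[of lam T] lam Tk by simp
  define d where "d = min t (L - t)"
  have d: "d > 0" using t by (simp add: d_def)
  have din: "y \<in> {0..L}" if "\<bar>t - y\<bar> < d" for y using that unfolding d_def by auto
  have tt: "tau t \<bullet> tau t = 1" using sph t by (simp add: dot_square_norm)
  have ll: "lam \<bullet> lam = 1" using lam by (simp add: dot_square_norm)
  have gle: "\<bar>lam \<bullet> tau y\<bar> \<le> 1" if "y \<in> {0..L}" for y
    using Cauchy_Schwarz_ineq2[of lam "tau y"] lam sph that by simp
  have tT: "tau t \<bullet> T = 0"
  proof -
    have "((\<lambda>s. tau t \<bullet> tau s) has_real_derivative tau t \<bullet> T) (at t)" by (rule vd_inner_const[OF dt])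
    moreover have "\<forall>y. \<bar>t - y\<bar> < d \<longrightarrow> tau t \<bullet> tau y \<le> tau t \<bullet> tau t"
    proof (intro allI impI)
      fix y assume "\<bar>t - y\<bar> < d"
      hence "y \<in> {0..L}" by (rule din)
      hence "tau t \<bullet> tau y \<le> norm (tau t) * norm (tau y)" using norm_cauchy_schwarz by blast
      thus "tau t \<bullet> tau y \<le> tau t \<bullet> tau t" using sph \<open>y \<in> {0..L}\<close> t tt by simp
    qed
    ultimately show ?thesis using DERIV_local_max d by blast
  qed
  show "u t \<noteq> 0 \<Longrightarrow> T = (k / norm (u t)) *\<^sub>R u t"
  proof -
    assume "u t \<noteq> 0"
    hence "T = (1 / norm (u t)) *\<^sub>R (norm (u t) *\<^sub>R T)" by simp
    also have "\<dots> = (k / norm (u t)) *\<^sub>R u t" using o2 by simp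
    finally show ?thesis .
  qed
  then have Teq: "u t \<noteq> 0 \<Longrightarrow> T = (k / norm (u t)) *\<^sub>R u t" .
  have both: "((\<lambda>s. k * norm (u s)) has_real_derivative bt * (lam \<bullet> T)) (at t)
    \<and> (lam \<bullet> T)^2 = k^2 * (1 - (lam \<bullet> tau t)^2)"
  proof (cases "u t = 0")
    case False
    define nu where "nu = norm (u t)"
    have nu: "nu > 0" using False by (simp add: nu_def)
    have ueq: "u t = (nu / k) *\<^sub>R T" using Teq[OF False] nu k by (simp add: nu_def)
    have TT: "T \<bullet> T = k^2"
    proof -
      have "norm T = k" using Teq[OF False] k nu by (simp add: nu_def)
      thus ?thesis by (simp add: dot_square_norm)
    qed
    have ut: "u t \<bullet> tau t = 0" using ueq tT by (simp add: inner_commute)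
    have Uu: "U \<bullet> u t = bt * (lam \<bullet> u t)"
    proof -
      have "U = bt *\<^sub>R lam - ((u t \<bullet> T) + bt * (lam \<bullet> tau t)) *\<^sub>R tau t"
        using o1 by (simp add: algebra_simps)
      hence "U \<bullet> u t = bt * (lam \<bullet> u t) - ((u t \<bullet> T) + bt * (lam \<bullet> tau t)) * (tau t \<bullet> u t)"
        by (simp add: inner_diff_left)
      thus ?thesis using ut by (simp add: inner_commute)
    qed
    have "((\<lambda>s. norm (u s)) has_real_derivative (U \<bullet> sgn (u t))) (at t)"
      by (rule vd_norm[OF du False])
    hence "((\<lambda>s. k * norm (u s)) has_real_derivative k * (U \<bullet> sgn (u t))) (at t)"
      by (rule DERIV_cmult)
    moreover have "k * (U \<bullet> sgn (u t)) = bt * (lam \<bullet> T)"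
    proof -
      have "U \<bullet> sgn (u t) = (U \<bullet> u t) / nu" by (simp add: sgn_div_norm nu_def divide_inverse)
      also have "\<dots> = bt * (lam \<bullet> u t) / nu" using Uu by simp
      also have "lam \<bullet> u t = (nu / k) * (lam \<bullet> T)" using ueq by simp
      finally show ?thesis using k nu by (simp add: field_simps)
    qed
    ultimately have D1: "((\<lambda>s. k * norm (u s)) has_real_derivative bt * (lam \<bullet> T)) (at t)" by simp
    obtain a b c where abc: "(a, b, c) \<noteq> (0::real, 0::real, 0::real)" "a *\<^sub>R tau t + b *\<^sub>R T + c *\<^sub>R lam = 0"
      using dep[OF False] by blast
    have c0: "c \<noteq> 0"
    proof
      assume c: "c = 0"
      hence e: "a *\<^sub>R tau t + b *\<^sub>R T = 0" using abc by simp
      have "tau t \<bullet> (a *\<^sub>R tau t + b *\<^sub>R T) = a" using tt tT by (simp add: inner_add_right)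
      hence a: "a = 0" using e by simp
      have "T \<bullet> (a *\<^sub>R tau t + b *\<^sub>R T) = b * k^2" using TT tT by (simp add: inner_add_right inner_commute)
      hence "b = 0" using e k by simp
      with a c abc show False by simp
    qed
    define \<alpha> where "\<alpha> = - a / c"
    define \<gamma> where "\<gamma> = - b / c"
    have lamE: "lam = \<alpha> *\<^sub>R tau t + \<gamma> *\<^sub>R T"
    proof -
      have "c *\<^sub>R lam = - (a *\<^sub>R tau t + b *\<^sub>R T)" by (metis abc(2) add.commute eq_neg_iff_add_eq_0)
      moreover have "lam = (1/c) *\<^sub>R (c *\<^sub>R lam)" using c0 by simp
      ultimately have "lam = (1/c) *\<^sub>R (- (a *\<^sub>R tau t + b *\<^sub>R T))" by simp
      thus ?thesis using c0 by (simp add: \<alpha>_def \<gamma>_def algebra_simps scaleR_add_right)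
    qed
    have tT': "T \<bullet> tau t = 0" using tT by (simp add: inner_commute)
    have l1: "lam \<bullet> tau t = \<alpha>" using tt tT' by (simp add: lamE inner_add_left)
    have l2: "lam \<bullet> T = \<gamma> * k^2" using TT tT by (simp add: lamE inner_add_left)
    have l3: "\<alpha>^2 + \<gamma>^2 * k^2 = 1"
    proof -
      have "lam \<bullet> lam = \<alpha>^2 + \<gamma>^2 * k^2" using tt tT tT' TT
        by (simp add: lamE inner_add_left inner_add_right power2_eq_square algebra_simps)
      thus ?thesis using ll by simp
    qed
    have l4: "\<gamma>^2 * k^2 = 1 - \<alpha>^2" using l3 by simp
    have "(lam \<bullet> T)^2 = k^2 * (\<gamma>^2 * k^2)" unfolding l2 by (simp add: power2_eq_square)
    hence "(lam \<bullet> T)^2 = k^2 * (1 - (lam \<bullet> tau t)^2)" using l4 l1 by simp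
    with D1 show ?thesis by simp
  next
    case True
    have U0: "U = 0"
    proof -
      have nb: "at t within {s. u s = 0} \<noteq> bot" using lp[OF True] by (simp add: trivial_limit_within)
      have "(u has_vector_derivative U) (at t within {s. u s = 0})" using du by (rule has_vector_derivative_at_within)
      moreover have "(u has_vector_derivative 0) (at t within {s. u s = 0})"
      proof (rule has_vector_derivative_transform[of t "{s. u s = 0}" u "\<lambda>_. 0" 0])
        show "t \<in> {s. u s = 0}" using True by simp
        show "\<And>x. x \<in> {s. u s = 0} \<Longrightarrow> u x = 0" by simp
        show "((\<lambda>_. 0) has_vector_derivative 0) (at t within {s. u s = 0})"
          by (rule has_vector_derivative_const)
      qed
      ultimately show ?thesis using vector_derivative_unique_within[OF nb] by blast
    qed
    have "bt *\<^sub>R (lam - (lam \<bullet> tau t) *\<^sub>R tau t) = 0" using o1 U0 True by simp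
    hence lamg: "lam = (lam \<bullet> tau t) *\<^sub>R tau t" using bt by simp
    have "1 = \<bar>lam \<bullet> tau t\<bar>"
    proof -
      have "norm lam = \<bar>lam \<bullet> tau t\<bar> * norm (tau t)" by (subst lamg) simp
      thus ?thesis using lam sph t by simp
    qed
    hence g2: "(lam \<bullet> tau t)^2 = 1" by (metis abs_power2 power2_abs power_one)
    have gT: "lam \<bullet> T = 0"
    proof (cases "lam \<bullet> tau t = 1")
      case True
      have "\<forall>y. \<bar>t - y\<bar> < d \<longrightarrow> lam \<bullet> tau y \<le> lam \<bullet> tau t"
        using gle din True by (metis abs_le_D1)
      thus ?thesis using DERIV_local_max[OF dg d] by blast
    next
      case False
      hence "lam \<bullet> tau t = -1" using \<open>1 = \<bar>lam \<bullet> tau t\<bar>\<close> by linarith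
      hence "\<forall>y. \<bar>t - y\<bar> < d \<longrightarrow> lam \<bullet> tau t \<le> lam \<bullet> tau y"
        using gle din by (metis abs_le_D1 minus_le_iff abs_minus_cancel abs_le_iff)
      thus ?thesis using DERIV_local_min[OF dg d] by blast
    qed
    have "((\<lambda>s. norm (u s)) has_real_derivative 0) (at t)"
      using vd_norm0[of u t] du U0 True by simp
    hence "((\<lambda>s. k * norm (u s)) has_real_derivative k * 0) (at t)" by (rule DERIV_cmult)
    then show ?thesis using gT g2 by simp
  qed
  show "((\<lambda>s. k * norm (u s)) has_real_derivative bt * (lam \<bullet> T)) (at t)" using both by simp
  show "(lam \<bullet> T)^2 = k^2 * (1 - (lam \<bullet> tau t)^2)" using both by simp
qed

lemma AE_interval_ex:
  assumes "AE t in lborel. t \<in> {a<..<b} \<longrightarrow> P t" "a < (b::real)"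
  shows "\<exists>t\<in>{a<..<b}. P t"
proof (rule ccontr)
  assume neg: "\<not> ?thesis"
  obtain N where N: "{t \<in> space lborel. \<not>(t \<in> {a<..<b} \<longrightarrow> P t)} \<subseteq> N" "N \<in> null_sets lborel"
    using assms(1) unfolding eventually_ae_filter by blast
  have "negligible N" using N(2) negligible_iff_null_sets null_sets_completionI by blast
  moreover have "{a<..<b} \<subseteq> N" using N(1) neg by auto
  ultimately have "negligible {a<..<b}" using negligible_subset by blast
  thus False using negligible_interval(2)[of a b] assms(2) by (simp add: box_real)
qed

lemma countable_isolated:
  fixes S :: "real set"
  shows "countable {x\<in>S. \<not> x islimpt S}"
proof -
  define X where "X = {x\<in>S. \<not> x islimpt S}"
  have "\<forall>x\<in>X. \<exists>p::rat\<times>rat. of_rat (fst p) < x \<and> x < of_rat (snd p) \<and> (\<forall>y\<in>S. of_rat (fst p) < y \<and> y < of_rat (snd p) \<longrightarrow> y = x)"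
  proof
    fix x assume "x \<in> X"
    hence "\<not> x islimpt S" by (simp add: X_def)
    then obtain e where e: "e > 0" "\<forall>y\<in>S. y \<noteq> x \<longrightarrow> \<not> dist y x < e"
      unfolding islimpt_approachable by blast
    obtain q1 where q1: "x - e < of_rat q1" "of_rat q1 < x" using of_rat_dense[of "x - e" x] e by auto
    obtain q2 where q2: "x < of_rat q2" "of_rat q2 < x + e" using of_rat_dense[of x "x + e"] e by auto
    show "\<exists>p::rat\<times>rat. of_rat (fst p) < x \<and> x < of_rat (snd p) \<and> (\<forall>y\<in>S. of_rat (fst p) < y \<and> y < of_rat (snd p) \<longrightarrow> y = x)"
    proof (intro exI[of _ "(q1, q2)"] conjI ballI impI)
      fix y assume "y \<in> S" "of_rat (fst (q1, q2)) < y \<and> y < of_rat (snd (q1, q2))"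
      hence "dist y x < e" using q1 q2 by (auto simp: dist_real_def)
      thus "y = x" using e \<open>y \<in> S\<close> by blast
    qed (use q1 q2 in auto)
  qed
  then obtain \<phi> where \<phi>: "\<forall>x\<in>X. of_rat (fst (\<phi> x)) < x \<and> x < of_rat (snd (\<phi> x)) \<and> (\<forall>y\<in>S. of_rat (fst (\<phi> x)) < y \<and> y < of_rat (snd (\<phi> x)) \<longrightarrow> y = x)"
    by metis
  have "inj_on \<phi> X"
  proof (rule inj_onI)
    fix x x' assume xx: "x \<in> X" "x' \<in> X" "\<phi> x = \<phi> x'"
    hence "x' \<in> S" by (simp add: X_def)
    moreover have "of_rat (fst (\<phi> x)) < x' \<and> x' < of_rat (snd (\<phi> x))" using \<phi> xx by metis
    ultimately show "x = x'" using \<phi> xx(1) by metis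
  qed
  moreover have "countable (\<phi> ` X)" by (rule countable_subset[OF subset_UNIV]) simp
  ultimately show ?thesis unfolding X_def[symmetric] using countable_image_inj_on by blast
qed

lemma const_deriv0:
  fixes f :: "real \<Rightarrow> real"
  assumes "(f has_real_derivative D) (at t)" "d > 0" "\<forall>y. \<bar>t - y\<bar> < d \<longrightarrow> f y = f t"
  shows "D = 0"
proof -
  have "\<forall>y. \<bar>t - y\<bar> < d \<longrightarrow> f y \<le> f t" using assms(3) by (metis order_refl)
  thus ?thesis using DERIV_local_max[OF assms(1,2)] by blast
qed

lemma const_transfer:
  fixes F G b :: "real \<Rightarrow> real"
  assumes pq: "p \<le> q" and lipF: "CF-lipschitz_on {p..q} F"
    and der: "AE t in lborel. t \<in> {p<..<q} \<longrightarrow> (\<exists>d. (G has_real_derivative d) (at t) \<and> (F has_real_derivative b t * d) (at t))"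
    and Gc: "\<forall>t\<in>{p..q}. G t = G p"
  shows "F q = F p"
proof -
  have d0: "AE t in lborel. t \<in> {p<..<q} \<longrightarrow> (F has_real_derivative 0) (at t)"
    using der
  proof (rule eventually_mono)
    fix t assume H: "t \<in> {p<..<q} \<longrightarrow> (\<exists>d. (G has_real_derivative d) (at t) \<and> (F has_real_derivative b t * d) (at t))"
    show "t \<in> {p<..<q} \<longrightarrow> (F has_real_derivative 0) (at t)"
    proof
      assume t: "t \<in> {p<..<q}"
      then obtain d where d: "(G has_real_derivative d) (at t)" "(F has_real_derivative b t * d) (at t)" using H by auto
      have "d = 0"
      proof (rule const_deriv0[OF d(1)])
        show "min (t - p) (q - t) > 0" using t by auto
        show "\<forall>y. \<bar>t - y\<bar> < min (t - p) (q - t) \<longrightarrow> G y = G t"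
        proof (intro allI impI)
          fix y assume "\<bar>t - y\<bar> < min (t - p) (q - t)"
          hence "y \<in> {p..q}" by auto
          moreover have "t \<in> {p..q}" using t by auto
          ultimately show "G y = G t" using Gc by metis
        qed
      qed
      thus "(F has_real_derivative 0) (at t)" using d(2) by simp
    qed
  qed
  have "F p \<le> F q"
  proof (rule mono_ae[OF pq lipF])
    show "AE t in lborel. t \<in> {p<..<q} \<longrightarrow> (\<exists>d\<ge>0. (F has_real_derivative d) (at t))"
      using d0 by (rule eventually_mono) (metis order_refl)
  qed
  moreover have "- F p \<le> - F q"
  proof (rule mono_ae[OF pq, of CF "\<lambda>t. - F t"])
    show "CF-lipschitz_on {p..q} (\<lambda>t. - F t)" using lipF by simp
    show "AE t in lborel. t \<in> {p<..<q} \<longrightarrow> (\<exists>d\<ge>0. ((\<lambda>t. - F t) has_real_derivative d) (at t))"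
      using d0 by (rule eventually_mono) (metis DERIV_minus neg_0_equal_iff_equal order_refl)
  qed
  ultimately show ?thesis by simp
qed

lemma disj_int:
  fixes a1 b1 a2 b2 :: real
  assumes "a1 < b1" "a2 < b2" "{a1<..<b1} \<inter> {a2<..<b2} = {}" "b1 \<le> b2"
  shows "b1 \<le> a2"
proof (rule ccontr)
  assume "\<not> b1 \<le> a2"
  define x where "x = (max a1 a2 + b1) / 2"
  have m1: "a1 \<le> max a1 a2" "a2 \<le> max a1 a2" "max a1 a2 < b1" using assms \<open>\<not> b1 \<le> a2\<close> by auto
  have "max a1 a2 < x" "x < b1" using m1(3) unfolding x_def by (simp_all add: field_simps)
  hence "x \<in> {a1<..<b1} \<inter> {a2<..<b2}" using m1 assms(4) by auto
  with assms(3) show False by blast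
qed

lemma interval_extend_left:
  fixes C :: "real set"
  assumes Ci: "is_interval C" and Cne: "C \<noteq> {}" and bb: "bdd_below C" and l: "l \<le> Inf C"
  shows "is_interval (C \<union> {l..Inf C})"
  unfolding is_interval_1
proof (intro ballI allI impI)
  fix x y z assume x: "x \<in> C \<union> {l..Inf C}" and y: "y \<in> C \<union> {l..Inf C}" and xz: "x \<le> z \<and> z \<le> y"
  show "z \<in> C \<union> {l..Inf C}"
  proof (cases "z \<le> Inf C")
    case True
    have "l \<le> x" using x l cInf_lower[OF _ bb] by (auto intro: order_trans)
    thus ?thesis using True xz by auto
  next
    case False
    hence "y \<in> C" using y xz by auto
    obtain c where c: "c \<in> C" "c < z" using cInf_lessD[OF Cne] False by (metis not_le)
    have "z \<in> C" using Ci c \<open>y \<in> C\<close> xz unfolding is_interval_1 by (meson less_imp_le)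
    thus ?thesis by simp
  qed
qed

lemma interval_extend_right:
  fixes C :: "real set"
  assumes Ci: "is_interval C" and Cne: "C \<noteq> {}" and bb: "bdd_above C" and r: "Sup C \<le> r"
  shows "is_interval (C \<union> {Sup C..r})"
  unfolding is_interval_1
proof (intro ballI allI impI)
  fix x y z assume x: "x \<in> C \<union> {Sup C..r}" and y: "y \<in> C \<union> {Sup C..r}" and xz: "x \<le> z \<and> z \<le> y"
  show "z \<in> C \<union> {Sup C..r}"
  proof (cases "Sup C \<le> z")
    case True
    have "y \<le> r" using y r cSup_upper[OF _ bb] by (auto intro: order_trans)
    thus ?thesis using True xz by auto
  next
    case False
    hence "x \<in> C" using x xz by auto
    obtain c where c: "c \<in> C" "z < c" using less_cSupD[OF Cne] False by (metis not_le)
    have "z \<in> C" using Ci c \<open>x \<in> C\<close> xz unfolding is_interval_1 by (meson less_imp_le)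
    thus ?thesis by simp
  qed
qed

lemma floor_sep:
  fixes b1 b2 l :: real
  assumes "l > 0" "b1 + l \<le> b2"
  shows "floor (b1 / l) < floor (b2 / l)"
proof -
  have "(b1 + l) / l \<le> b2 / l" using assms by (intro divide_right_mono) auto
  moreover have "(b1 + l) / l = b1 / l + 1" using assms by (simp add: field_simps)
  ultimately have "b1 / l + 1 \<le> b2 / l" by simp
  hence "floor (b1 / l + 1) \<le> floor (b2 / l)" by (rule floor_mono)
  thus ?thesis by simp
qed

lemma finite_sep:
  fixes R :: "real set set" and l :: real and Lm :: real
  assumes l: "l > 0"
    and R: "\<And>C. C \<in> R \<Longrightarrow> \<exists>a b. a < b \<and> C = {a<..<b} \<and> l \<le> b - a \<and> 0 \<le> a \<and> b \<le> Lm"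
    and disj: "\<And>C D. C \<in> R \<Longrightarrow> D \<in> R \<Longrightarrow> C \<noteq> D \<Longrightarrow> C \<inter> D = {}"
  shows "finite R"
proof -
  define h where "h C = floor (Sup C / l)" for C :: "real set"
  have img: "h ` R \<subseteq> {0..floor (Lm / l)}"
  proof
    fix y assume "y \<in> h ` R"
    then obtain C where C: "C \<in> R" "y = h C" by blast
    obtain a b where ab: "a < b" "C = {a<..<b}" "l \<le> b - a" "0 \<le> a" "b \<le> Lm" using R[OF C(1)] by blast
    have "Sup C = b" using ab by (simp add: cSup_greaterThanLessThan)
    hence "y = floor (b / l)" using C by (simp add: h_def)
    moreover have "0 \<le> b / l" "b / l \<le> Lm / l" using ab l by (auto simp: divide_right_mono)
    ultimately show "y \<in> {0..floor (Lm / l)}" by (auto intro: floor_mono)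
  qed
  have "inj_on h R"
  proof (rule inj_onI, rule ccontr)
    fix C D assume C: "C \<in> R" and D: "D \<in> R" and hCD: "h C = h D" and ne: "C \<noteq> D"
    obtain a1 b1 where ab1: "a1 < b1" "C = {a1<..<b1}" "l \<le> b1 - a1" using R[OF C] by blast
    obtain a2 b2 where ab2: "a2 < b2" "D = {a2<..<b2}" "l \<le> b2 - a2" using R[OF D] by blast
    have sC: "Sup C = b1" using ab1 by (simp add: cSup_greaterThanLessThan)
    have sD: "Sup D = b2" using ab2 by (simp add: cSup_greaterThanLessThan)
    have dd: "{a1<..<b1} \<inter> {a2<..<b2} = {}" using disj[OF C D ne] ab1 ab2 by simp
    show False
    proof (cases "b1 \<le> b2")
      case True
      have "b1 \<le> a2"
      proof (rule ccontr)
        assume "\<not> b1 \<le> a2"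
        define x where "x = (max a1 a2 + b1) / 2"
        have m1: "a1 \<le> max a1 a2" "a2 \<le> max a1 a2" "max a1 a2 < b1" using ab1 \<open>\<not> b1 \<le> a2\<close> by auto
        have "max a1 a2 < x" "x < b1" using m1(3) unfolding x_def by (simp_all add: field_simps)
        hence "x \<in> {a1<..<b1} \<inter> {a2<..<b2}" using m1 True by auto
        with dd show False by blast
      qed
      hence "b1 + l \<le> b2" using ab2 by linarith
      hence "floor (b1 / l) < floor (b2 / l)" by (rule floor_sep[OF l])
      thus False using hCD sC sD by (simp add: h_def)
    next
      case False
      have "b2 \<le> a1"
      proof (rule ccontr)
        assume "\<not> b2 \<le> a1"
        define x where "x = (max a1 a2 + b2) / 2"
        have m1: "a1 \<le> max a1 a2" "a2 \<le> max a1 a2" "max a1 a2 < b2" using ab2 \<open>\<not> b2 \<le> a1\<close> by auto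
        have "max a1 a2 < x" "x < b2" using m1(3) unfolding x_def by (simp_all add: field_simps)
        hence "x \<in> {a1<..<b1} \<inter> {a2<..<b2}" using m1 False by auto
        with dd show False by blast
      qed
      hence "b2 + l \<le> b1" using ab1 by linarith
      hence "floor (b2 / l) < floor (b1 / l)" by (rule floor_sep[OF l])
      thus False using hCD sC sD by (simp add: h_def)
    qed
  qed
  moreover have "finite (h ` R)" using img finite_subset by blast
  ultimately show ?thesis using finite_imageD by blast
qed

theorem mainTheorem18:
  fixes L k :: real and beta :: "real \<Rightarrow> real"
    and tau tau' u u' :: "real \<Rightarrow> real ^ 'n" and lam :: "real ^ 'n"
    and \<Omega> :: "real set"
  assumes n2: "CARD('n) \<ge> 2"
    and L: "L > 0"
    and beta_pos: "\<forall>t\<in>{0..L}. beta t > 0"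
    and beta_bv: "bounded_variation_on beta 0 L"
    and beta_inv_bdd: "\<exists>B. \<forall>t\<in>{0..L}. 1 / beta t \<le> B"
    and tau_lip: "\<exists>C. C-lipschitz_on {0..L} tau"
    and tau_sphere: "\<forall>t\<in>{0..L}. norm (tau t) = 1"
    and tau_deriv: "AE t in lborel. t \<in> {0<..<L} \<longrightarrow> (tau has_vector_derivative tau' t) (at t)"
    and k_def: "esssup (restrict_space lborel {0<..<L}) (\<lambda>t. ereal (norm (tau' t))) = ereal k"
    and k_pos: "k > 0"
    and lam: "norm lam = 1"
    and u_lip: "\<exists>C. C-lipschitz_on {0..L} u"
    and u_deriv: "AE t in lborel. t \<in> {0<..<L} \<longrightarrow> (u has_vector_derivative u' t) (at t)"
    and u_nonzero: "\<exists>t\<in>{0..L}. u t \<noteq> 0"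
    and ode1: "AE t in lborel. t \<in> {0<..<L} \<longrightarrow>
        u' t + (u t \<bullet> tau' t) *\<^sub>R tau t = beta t *\<^sub>R (lam - (lam \<bullet> tau t) *\<^sub>R tau t)"
    and ode2: "AE t in lborel. t \<in> {0<..<L} \<longrightarrow> norm (u t) *\<^sub>R tau' t = k *\<^sub>R u t"
    and Omega_def: "\<Omega> = {t\<in>{0..L}. k * norm (u t) > 0}"
    and dep: "AE t in lborel. t \<in> \<Omega> \<longrightarrow> lin_dep3 (tau t) (tau' t) lam"
  shows "finite (components ({t\<in>{0..L}. tau t \<noteq> lam \<and> tau t \<noteq> - lam} \<union> \<Omega>))"
proof -
  define g where "g = (\<lambda>t. lam \<bullet> tau t)"
  define f where "f = (\<lambda>t. k * norm (u t))"
  define G' where "G' = (\<lambda>t. lam \<bullet> tau' t)"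
  have Omega_eq: "\<Omega> = {t\<in>{0..L}. u t \<noteq> 0}" using k_pos unfolding Omega_def by auto
  obtain Ct where Ct: "Ct-lipschitz_on {0..L} tau" using tau_lip by blast
  obtain Cu where Cu: "Cu-lipschitz_on {0..L} u" using u_lip by blast
  have Cu0: "Cu \<ge> 0" using Cu lipschitz_on_nonneg by blast
  have Ct0: "Ct \<ge> 0" using Ct lipschitz_on_nonneg by blast
  have contt: "continuous_on {0..L} tau" using Ct by (rule lipschitz_on_continuous_on)
  have contu: "continuous_on {0..L} u" using Cu by (rule lipschitz_on_continuous_on)
  have lipf: "(k*Cu)-lipschitz_on {0..L} f"
  proof (rule lipschitz_onI)
    fix x y assume xy: "x \<in> {0..L}" "y \<in> {0..L}"
    have "dist (f x) (f y) = k * \<bar>norm (u x) - norm (u y)\<bar>"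
      using k_pos by (simp add: f_def dist_real_def right_diff_distrib[symmetric] abs_mult)
    also have "\<dots> \<le> k * norm (u x - u y)" using k_pos by (intro mult_left_mono norm_triangle_ineq3) auto
    also have "norm (u x - u y) \<le> Cu * dist x y" using lipschitz_onD[OF Cu xy] by (simp add: dist_norm)
    finally show "dist (f x) (f y) \<le> k * Cu * dist x y" using k_pos by (simp add: mult.assoc)
  qed (use k_pos Cu0 in simp)
  have lipg: "Ct-lipschitz_on {0..L} g"
  proof (rule lipschitz_onI)
    fix x y assume xy: "x \<in> {0..L}" "y \<in> {0..L}"
    have "dist (g x) (g y) = \<bar>lam \<bullet> (tau x - tau y)\<bar>" by (simp add: g_def dist_real_def inner_diff_right)
    also have "\<dots> \<le> norm (tau x - tau y)" using Cauchy_Schwarz_ineq2[of lam "tau x - tau y"] lam by simp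
    also have "\<dots> \<le> Ct * dist x y" using lipschitz_onD[OF Ct xy] by (simp add: dist_norm)
    finally show "dist (g x) (g y) \<le> Ct * dist x y" .
  qed (use Ct0 in simp)
  have contf: "continuous_on {0..L} f" using lipf by (rule lipschitz_on_continuous_on)
  have contg: "continuous_on {0..L} g" using lipg by (rule lipschitz_on_continuous_on)
  have gle: "\<bar>g t\<bar> \<le> 1" if "t \<in> {0..L}" for t
    using Cauchy_Schwarz_ineq2[of lam "tau t"] lam tau_sphere that by (simp add: g_def)
  have fnn: "0 \<le> f t" for t using k_pos by (simp add: f_def)
  have f0: "f t = 0 \<longleftrightarrow> u t = 0" for t using k_pos by (simp add: f_def)
  have gpm: "(g t = 1 \<longleftrightarrow> tau t = lam) \<and> (g t = -1 \<longleftrightarrow> tau t = - lam)" if t: "t \<in> {0..L}" for t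
  proof -
    have tt: "tau t \<bullet> tau t = 1" using tau_sphere t by (simp add: dot_square_norm)
    have ll: "lam \<bullet> lam = 1" using lam by (simp add: dot_square_norm)
    have tl: "tau t \<bullet> lam = g t" by (simp add: g_def inner_commute)
    have lt: "lam \<bullet> tau t = g t" by (simp add: g_def)
    have e1: "(tau t - lam) \<bullet> (tau t - lam) = 2 - 2 * g t"
      using tt ll tl lt by (simp add: inner_diff_left inner_diff_right)
    have e2: "(tau t + lam) \<bullet> (tau t + lam) = 2 + 2 * g t"
      using tt ll tl lt by (simp add: inner_add_left inner_add_right)
    have "g t = 1 \<longleftrightarrow> tau t = lam"
    proof
      assume "g t = 1" hence "(tau t - lam) \<bullet> (tau t - lam) = 0" using e1 by simp
      thus "tau t = lam" by simp
    qed (simp add: g_def ll)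
    moreover have "g t = -1 \<longleftrightarrow> tau t = - lam"
    proof
      assume "g t = -1" hence "(tau t + lam) \<bullet> (tau t + lam) = 0" using e2 by simp
      hence "tau t + lam = 0" by simp
      thus "tau t = - lam" by (simp add: eq_neg_iff_add_eq_0)
    qed (simp add: g_def ll)
    ultimately show ?thesis by blast
  qed
  define Z where "Z = {t\<in>{0..L}. (g t = 1 \<or> g t = -1) \<and> u t = 0}"
  have Seq: "{t\<in>{0..L}. tau t \<noteq> lam \<and> tau t \<noteq> - lam} \<union> \<Omega> = {0..L} - Z"
  proof (rule set_eqI)
    fix t
    show "t \<in> {t\<in>{0..L}. tau t \<noteq> lam \<and> tau t \<noteq> - lam} \<union> \<Omega> \<longleftrightarrow> t \<in> {0..L} - Z"
    proof (cases "t \<in> {0..L}")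
      case True
      from gpm[OF True] show ?thesis unfolding Omega_eq Z_def using True by blast
    next
      case False
      then show ?thesis unfolding Omega_eq Z_def by blast
    qed
  qed
  obtain B where B: "\<forall>t\<in>{0..L}. 1 / beta t \<le> B" using beta_inv_bdd by blast
  have Bpos: "B > 0" using B beta_pos L by (metis atLeastAtMost_iff less_eq_real_def less_le_trans zero_less_divide_1_iff)
  have blow: "1/B \<le> beta t" if "t \<in> {0..L}" for t
  proof -
    have "1 / beta t \<le> B" "beta t > 0" using B beta_pos that by auto
    thus ?thesis using Bpos by (simp add: field_simps)
  qed
  obtain V where V: "\<forall>xs. sorted xs \<and> set xs \<subseteq> {0..L} \<longrightarrow> vr beta xs \<le> V"
    using beta_bv unfolding bounded_variation_on_def vr_sum[symmetric] by blast
  define Bb where "Bb = \<bar>beta 0\<bar> + V"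
  have bbd: "\<bar>beta t\<bar> \<le> Bb" if "t \<in> {0..L}" for t
  proof -
    have "sorted [0, t] \<and> set [0, t] \<subseteq> {0..L}" using that L by auto
    hence "vr beta [0, t] \<le> V" using V by blast
    hence "\<bar>beta t - beta 0\<bar> \<le> V" by simp
    thus ?thesis unfolding Bb_def by linarith
  qed
  have AEk: "AE t in lborel. t \<in> {0<..<L} \<longrightarrow> norm (tau' t) \<le> k"
  proof -
    have "AE t in restrict_space lborel {0<..<L}. ereal (norm (tau' t)) \<le> ereal k"
      using esssup_AE[of "\<lambda>t. ereal (norm (tau' t))" "restrict_space lborel {0<..<L}"] k_def by simp
    thus ?thesis by (subst (asm) AE_restrict_space_iff) auto
  qed
  have AEiso: "AE t in lborel. u t = 0 \<longrightarrow> t islimpt {s. u s = 0}"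
  proof (rule AE_I')
    show "{x\<in>{s. u s = 0}. \<not> x islimpt {s. u s = 0}} \<in> null_sets lborel"
      by (rule countable_imp_null_set_lborel[OF countable_isolated])
    show "{x \<in> space lborel. \<not> (u x = 0 \<longrightarrow> x islimpt {s. u s = 0})} \<subseteq> {x\<in>{s. u s = 0}. \<not> x islimpt {s. u s = 0}}"
      by auto
  qed
  have AEmain: "AE t in lborel. t \<in> {0<..<L} \<longrightarrow>
      (g has_real_derivative G' t) (at t) \<and> (f has_real_derivative beta t * G' t) (at t)
      \<and> \<bar>G' t\<bar> \<le> k \<and> (G' t)^2 = k^2 * (1 - (g t)^2)
      \<and> (u t \<noteq> 0 \<longrightarrow> tau' t = (k / norm (u t)) *\<^sub>R u t)"
    using tau_deriv u_deriv ode1 ode2 dep AEk AEiso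
  proof eventually_elim
    case (elim t)
    show ?case
    proof
      assume t: "t \<in> {0<..<L}"
      have tin: "t \<in> {0..L}" using t by auto
      have dd: "u t \<noteq> 0 \<Longrightarrow> (\<exists>a b c. (a, b, c) \<noteq> (0::real, 0::real, 0::real) \<and> a *\<^sub>R tau t + b *\<^sub>R tau' t + c *\<^sub>R lam = 0)"
        using elim(5) tin unfolding Omega_eq lin_dep3_def by auto
      note P = pointwise[of t L tau "tau' t" u "u' t" "beta t" lam k, OF _ _ _ _ _ _ _ k_pos _ lam tau_sphere dd]
      have pre: "0 < t" "t < L" "(tau has_vector_derivative tau' t) (at t)" "(u has_vector_derivative u' t) (at t)"
        "u' t + (u t \<bullet> tau' t) *\<^sub>R tau t = beta t *\<^sub>R (lam - (lam \<bullet> tau t) *\<^sub>R tau t)"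
        "norm (u t) *\<^sub>R tau' t = k *\<^sub>R u t" "norm (tau' t) \<le> k" "0 < beta t"
        using elim t beta_pos tin by auto
      have lp: "u t = 0 \<Longrightarrow> t islimpt {s. u s = 0}" using elim(7) by blast
      show "(g has_real_derivative G' t) (at t) \<and> (f has_real_derivative beta t * G' t) (at t)
      \<and> \<bar>G' t\<bar> \<le> k \<and> (G' t)^2 = k^2 * (1 - (g t)^2)
      \<and> (u t \<noteq> 0 \<longrightarrow> tau' t = (k / norm (u t)) *\<^sub>R u t)"
        using P[OF pre asm_rl lp] unfolding g_def f_def G'_def by blast
    qed
  qed
  have AEder: "AE t in lborel. t \<in> {0<..<L} \<longrightarrow> (\<exists>d. (g has_real_derivative d) (at t) \<and> (f has_real_derivative beta t * d) (at t) \<and> \<bar>d\<bar> \<le> k)"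
    using AEmain by (rule eventually_mono) blast
  have AEsub: "AE t in lborel. t \<in> {p<..<q} \<longrightarrow> P t"
    if "{p<..<q} \<subseteq> {0<..<L}" "AE t in lborel. t \<in> {0<..<L} \<longrightarrow> P t" for p q P
    using that(2) by (rule eventually_mono) (use that(1) in blast)
  have fconst: "\<forall>t\<in>{p..q}. f t = f p"
    if pq: "0 \<le> p" "p \<le> q" "q \<le> L" and gc: "\<forall>t\<in>{p..q}. g t = g p" for p q
  proof
    fix t assume t: "t \<in> {p..q}"
    have sub: "{p..t} \<subseteq> {0..L}" using t pq by auto
    have l1: "(k*Cu)-lipschitz_on {p..t} f" using lipschitz_on_subset[OF lipf sub] .
    have "{p<..<t} \<subseteq> {0<..<L}" using t pq by auto
    from AEsub[OF this AEder]
    have d1: "AE s in lborel. s \<in> {p<..<t} \<longrightarrow> (\<exists>d. (g has_real_derivative d) (at s) \<and> (f has_real_derivative beta s * d) (at s))"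
      by (rule eventually_mono) blast
    have gc': "\<forall>s\<in>{p..t}. g s = g p"
    proof
      fix s assume "s \<in> {p..t}"
      hence "s \<in> {p..q}" using t by auto
      thus "g s = g p" by (rule gc[rule_format])
    qed
    show "f t = f p" using const_transfer[OF _ l1 d1 gc'] t by auto
  qed
  have blockR: "\<exists>e>c. e \<le> L \<and> (\<forall>t\<in>{c..e}. g t = g c)"
    if c: "0 \<le> c" "c < L" "f c = 0" "\<delta>0 > 0" and gmax: "\<forall>t\<in>{c..min L (c+\<delta>0)}. g t \<le> g c" for c \<delta>0
  proof -
    have Vc: "\<forall>xs. sorted xs \<and> set xs \<subseteq> {c<..<L} \<longrightarrow> vr beta xs \<le> V"
    proof (intro allI impI)
      fix xs assume "sorted xs \<and> set xs \<subseteq> {c<..<L}"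
      hence "sorted xs \<and> set xs \<subseteq> {0..L}" using c by auto
      thus "vr beta xs \<le> V" using V by blast
    qed
    have Bh: "1/(2*B) > 0" using Bpos by simp
    obtain \<delta> where \<delta>: "\<delta> > 0" "\<delta> \<le> L - c" "\<forall>xs. sorted xs \<and> set xs \<subseteq> {c<..<c+\<delta>} \<longrightarrow> vr beta xs \<le> 1/(2*B)"
      using var_small_right[OF Vc c(2) Bh] by blast
    define e where "e = min (c+\<delta>) (min L (c+\<delta>0))"
    have ce: "c < e" "e \<le> L" "e \<le> c + \<delta>" "e \<le> min L (c+\<delta>0)" using \<delta> c unfolding e_def by auto
    have sub: "{c..e} \<subseteq> {0..L}" using ce c by auto
    have subo: "{c<..<e} \<subseteq> {0<..<L}" using ce c by auto
    have "\<forall>t\<in>{c..e}. g t = g c"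
    proof (rule block[OF ce(1) lipschitz_on_subset[OF lipf sub] lipschitz_on_subset[OF lipg sub] AEsub[OF subo AEder] c(3)])
      show "\<forall>t\<in>{c..e}. 0 \<le> f t" using fnn by blast
      show "\<forall>t\<in>{c..e}. g t \<le> g c" using gmax ce(4) by auto
      show "\<forall>t\<in>{c<..<e}. 1/B \<le> beta t" using blow subo by auto
      show "\<forall>t\<in>{c<..<e}. \<bar>beta t\<bar> \<le> Bb" using bbd subo by auto
      show "\<forall>xs. sorted xs \<and> set xs \<subseteq> {c<..<e} \<longrightarrow> vr beta xs \<le> 1/(2*B)"
      proof (intro allI impI)
        fix xs assume "sorted xs \<and> set xs \<subseteq> {c<..<e}"
        hence "sorted xs \<and> set xs \<subseteq> {c<..<c+\<delta>}" using ce by auto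
        thus "vr beta xs \<le> 1/(2*B)" using \<delta>(3) by blast
      qed
      show "1/(2*B) < 1/B" using Bpos by (simp add: field_simps)
      show "0 \<le> k" using k_pos by simp
    qed
    thus ?thesis using ce by blast
  qed
  have Zclosed: "closed Z"
  proof -
    have "Z = ({t\<in>{0..L}. g t = 1} \<inter> {t\<in>{0..L}. u t = 0}) \<union> ({t\<in>{0..L}. g t = -1} \<inter> {t\<in>{0..L}. u t = 0})"
      unfolding Z_def by blast
    moreover have "closed {t\<in>{0..L}. g t = 1}" "closed {t\<in>{0..L}. g t = -1}" "closed {t\<in>{0..L}. u t = 0}"
      by (rule continuous_closed_preimage_constant[OF contg closed_atLeastAtMost]
          continuous_closed_preimage_constant[OF contu closed_atLeastAtMost])+
    ultimately show ?thesis by (simp add: closed_Int closed_Un)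
  qed
  have ropen: "\<exists>\<epsilon>>0. \<forall>y. \<bar>y - t\<bar> < \<epsilon> \<longrightarrow> y \<notin> Z" if tZ: "t \<notin> Z" for t
  proof -
    have oZ: "open (- Z)" using Zclosed by (simp add: closed_def)
    obtain \<epsilon> where "\<epsilon> > 0" "ball t \<epsilon> \<subseteq> - Z" using openE[OF oZ, of t] tZ by blast
    show ?thesis
    proof (intro exI[of _ \<epsilon>] conjI allI impI)
      show "\<epsilon> > 0" by fact
      fix y assume "\<bar>y - t\<bar> < \<epsilon>"
      hence "y \<in> ball t \<epsilon>" by (simp add: dist_real_def abs_minus_commute)
      thus "y \<notin> Z" using \<open>ball t \<epsilon> \<subseteq> - Z\<close> by blast
    qed
  qed
  define ell where "ell = 2 / (Ct + 1)"
  have lpos: "ell > 0" using Ct0 by (simp add: ell_def)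
  have endpoints: "ell \<le> b - a"
    if ab: "0 \<le> a" "a < b" "b \<le> L" and aZ: "a \<in> Z" and bZ: "b \<in> Z" and free: "{a<..<b} \<inter> Z = {}" for a b
  proof -
    have fa: "f a = 0" "u a = 0" using aZ f0 unfolding Z_def by auto
    have fb: "f b = 0" "u b = 0" using bZ f0 unfolding Z_def by auto
    have ga: "g a = 1 \<or> g a = -1" using aZ unfolding Z_def by auto
    have gb: "g b = 1 \<or> g b = -1" using bZ unfolding Z_def by auto
    have abL: "{a..b} \<subseteq> {0..L}" using ab by auto
    have U1: False if pq: "a \<le> p" "p < q" "q \<le> b" and gc: "\<forall>t\<in>{p..q}. g t = g p" and fp: "f p = 0"
      and gp: "g p = 1 \<or> g p = -1" for p q
    proof -
      have pq': "0 \<le> p" "p \<le> q" "q \<le> L" using pq ab by auto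
      have fc: "\<forall>t\<in>{p..q}. f t = f p" by (rule fconst[OF pq' gc])
      define m where "m = (p + q) / 2"
      have m: "p < m" "m < q" using pq unfolding m_def by (simp_all add: field_simps)
      hence mab: "m \<in> {a<..<b}" using pq by auto
      have mpq: "m \<in> {p..q}" using m by auto
      have "f m = 0" using fc[rule_format, OF mpq] fp by simp
      hence "u m = 0" using f0 by simp
      moreover have "g m = g p" by (rule gc[rule_format, OF mpq])
      moreover have "m \<in> {0..L}" using mab ab by auto
      ultimately have "m \<in> Z" using gp unfolding Z_def by auto
      thus False using free mab by blast
    qed
    have U2: False if pq: "0 \<le> p" "p < q" "q \<le> L" and gc: "\<forall>t\<in>{p..q}. g t = g p" and gp: "(g p)^2 < 1" for p q
    proof -
      have "{p<..<q} \<subseteq> {0<..<L}" using pq by auto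
      from AE_interval_ex[OF AEsub[OF this AEmain] pq(2)]
      obtain t where t: "t \<in> {p<..<q}" "(g has_real_derivative G' t) (at t)" "(G' t)^2 = k^2 * (1 - (g t)^2)"
        by blast
      have "G' t = 0"
      proof (rule const_deriv0[OF t(2)])
        show "min (t - p) (q - t) > 0" using t(1) by auto
        show "\<forall>y. \<bar>t - y\<bar> < min (t - p) (q - t) \<longrightarrow> g y = g t"
        proof (intro allI impI)
          fix y assume "\<bar>t - y\<bar> < min (t - p) (q - t)"
          hence "y \<in> {p..q}" by auto
          moreover have "t \<in> {p..q}" using t(1) by auto
          ultimately show "g y = g t" using gc by metis
        qed
      qed
      moreover have "t \<in> {p..q}" using t(1) by auto
      hence "g t = g p" by (rule gc[rule_format])
      ultimately have "k^2 * (1 - (g p)^2) = 0" using t(3) by simp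
      thus False using k_pos gp by simp
    qed
    have ga1: "g a = -1"
    proof (rule ccontr)
      assume "g a \<noteq> -1"
      hence ga1: "g a = 1" using ga by simp
      have gm: "\<forall>t\<in>{a..min L (a+(b-a))}. g t \<le> g a" using gle ga1 ab by (auto simp: abs_le_iff)
      obtain e where e: "e > a" "e \<le> L" "\<forall>t\<in>{a..e}. g t = g a"
        using blockR[OF ab(1) _ fa(1) _ gm] ab by auto
      have e3: "\<forall>t\<in>{a..min e b}. g t = g a"
      proof
        fix t assume "t \<in> {a..min e b}"
        hence "t \<in> {a..e}" by auto
        thus "g t = g a" by (rule e(3)[rule_format])
      qed
      have "a < min e b" using e ab by auto
      thus False using U1[OF order_refl _ _ e3 fa(1)] ga1 by auto
    qed
    have "\<exists>s\<in>{a..b}. g s = 1"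
    proof (rule ccontr)
      assume no1: "\<not> (\<exists>s\<in>{a..b}. g s = 1)"
      have gb1: "g b = -1" using gb no1 ab by auto
      have contab: "continuous_on {a..b} g" using contg abL continuous_on_subset by blast
      obtain s0 where s0: "s0 \<in> {a..b}" "\<forall>t\<in>{a..b}. g t \<le> g s0"
        using continuous_attains_sup[OF compact_Icc _ contab] ab by fastforce
      define m where "m = g s0"
      have m1: "m < 1" using no1 s0 gle abL unfolding m_def by (metis abs_le_D1 less_eq_real_def subsetD)
      have mm1: "m > -1"
      proof (rule ccontr)
        assume "\<not> m > -1"
        hence "\<forall>t\<in>{a..b}. g t = g a" using s0 gle abL ga1 unfolding m_def
          by (metis abs_le_iff antisym minus_le_iff not_less order_trans subsetD)
        thus False using U1[of a b] ab fa ga1 by auto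
      qed
      have s0ab: "s0 \<in> {a<..<b}" using s0 ga1 gb1 mm1 unfolding m_def by (metis atLeastAtMost_iff greaterThanLessThan_iff less_le less_irrefl)
      have m2: "m^2 < 1" using m1 mm1 by (simp add: abs_square_less_1 abs_less_iff)
      show False
      proof (cases "u s0 = 0")
        case True
        have gm: "\<forall>t\<in>{s0..min L (s0+(b-s0))}. g t \<le> g s0" using s0 ab by auto
        obtain e where e: "e > s0" "e \<le> L" "\<forall>t\<in>{s0..e}. g t = g s0"
          using blockR[OF _ _ _ _ gm] s0ab ab True f0 by auto
        have e3: "\<forall>t\<in>{s0..min e b}. g t = g s0"
        proof
          fix t assume "t \<in> {s0..min e b}"
          hence "t \<in> {s0..e}" by auto
          thus "g t = g s0" by (rule e(3)[rule_format])
        qed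
        have "0 \<le> s0" "s0 < min e b" "min e b \<le> L" using e s0ab ab by auto
        thus False using U2[OF _ _ _ e3] m2 unfolding m_def by blast
      next
        case False
        note uS = False
        have s0int: "s0 \<in> interior {0..L}" using s0ab ab by auto
        have cu: "isCont u s0" using continuous_on_interior[OF contu s0int] .
        have cg: "isCont g s0" using continuous_on_interior[OF contg s0int] .
        define \<phi> where "\<phi> = (\<lambda>t. lam \<bullet> ((k / norm (u t)) *\<^sub>R u t))"
        have cphi: "isCont \<phi> s0" unfolding \<phi>_def using cu uS by (intro continuous_intros) auto
        obtain d2 where d2: "d2 > 0" "\<forall>y. dist s0 y < d2 \<longrightarrow> u y \<noteq> 0"
          using continuous_at_avoid[OF cu uS] by blast
        define r0 where "r0 = min d2 (min (s0 - a) (b - s0))"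
        have r0: "r0 > 0" using d2 s0ab unfolding r0_def by auto
        have r0b: "{s0 - r0<..<s0 + r0} \<subseteq> {0<..<L}" "{s0 - r0..s0 + r0} \<subseteq> {a..b}"
          using s0ab ab unfolding r0_def by auto
        have r0u: "u y \<noteq> 0" if "\<bar>y - s0\<bar> < r0" for y using d2 that unfolding r0_def by (auto simp: dist_real_def)
        (* phi coincides with G' almost everywhere near s0 *)
        have AEphi: "AE y in lborel. y \<in> {s0 - r0<..<s0 + r0} \<longrightarrow>
            (g has_real_derivative \<phi> y) (at y) \<and> (\<phi> y)^2 = k^2 * (1 - (g y)^2)"
          using AEsub[OF r0b(1) AEmain]
        proof (rule eventually_mono)
          fix y assume H: "y \<in> {s0 - r0<..<s0 + r0} \<longrightarrow> (g has_real_derivative G' y) (at y) \<and> (f has_real_derivative beta y * G' y) (at y)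
            \<and> \<bar>G' y\<bar> \<le> k \<and> (G' y)^2 = k^2 * (1 - (g y)^2) \<and> (u y \<noteq> 0 \<longrightarrow> tau' y = (k / norm (u y)) *\<^sub>R u y)"
          show "y \<in> {s0 - r0<..<s0 + r0} \<longrightarrow> (g has_real_derivative \<phi> y) (at y) \<and> (\<phi> y)^2 = k^2 * (1 - (g y)^2)"
          proof
            assume y: "y \<in> {s0 - r0<..<s0 + r0}"
            hence "u y \<noteq> 0" using r0u by auto
            hence "G' y = \<phi> y" using H y unfolding G'_def \<phi>_def by auto
            thus "(g has_real_derivative \<phi> y) (at y) \<and> (\<phi> y)^2 = k^2 * (1 - (g y)^2)" using H y by auto
          qed
        qed
        have phi2: "(\<phi> s0)^2 = k^2 * (1 - (g s0)^2)"
        proof (rule ccontr)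
          assume ne: "(\<phi> s0)^2 \<noteq> k^2 * (1 - (g s0)^2)"
          have "isCont (\<lambda>t. (\<phi> t)^2 - k^2 * (1 - (g t)^2)) s0" using cphi cg by (intro continuous_intros)
          moreover have "(\<phi> s0)^2 - k^2 * (1 - (g s0)^2) \<noteq> 0" using ne by simp
          ultimately obtain d1 where d1: "d1 > 0" "\<forall>y. dist s0 y < d1 \<longrightarrow> (\<phi> y)^2 - k^2 * (1 - (g y)^2) \<noteq> 0"
            using continuous_at_avoid by blast
          define r1 where "r1 = min d1 r0"
          have r1: "r1 > 0" using d1 r0 unfolding r1_def by auto
          have "{s0 - r1<..<s0 + r1} \<subseteq> {s0 - r0<..<s0 + r0}" unfolding r1_def by auto
          have "AE y in lborel. y \<in> {s0 - r1<..<s0 + r1} \<longrightarrow> (\<phi> y)^2 = k^2 * (1 - (g y)^2)"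
            using AEphi by (rule eventually_mono) (use \<open>{s0 - r1<..<s0 + r1} \<subseteq> {s0 - r0<..<s0 + r0}\<close> in blast)
          from AE_interval_ex[OF this] r1 obtain y where y: "y \<in> {s0 - r1<..<s0 + r1}" "(\<phi> y)^2 = k^2 * (1 - (g y)^2)"
            by auto
          have "dist s0 y < d1" using y(1) unfolding r1_def by (auto simp: dist_real_def)
          thus False using d1 y(2) by auto
        qed
        have phin0: "\<phi> s0 \<noteq> 0" using phi2 m2 k_pos unfolding m_def by auto
        define c where "c = \<phi> s0 / 2"
        have "\<bar>c\<bar> > 0" using phin0 by (simp add: c_def)
        obtain d3 where d3: "d3 > 0" "\<forall>y. dist y s0 < d3 \<longrightarrow> dist (\<phi> y) (\<phi> s0) < \<bar>c\<bar>"
          using cphi \<open>\<bar>c\<bar> > 0\<close> unfolding continuous_at_eps_delta by blast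
        define r where "r = min d3 r0 / 2"
        have r: "r > 0" "r < d3" "r < r0" using d3 r0 unfolding r_def by auto
        have phinear: "\<bar>\<phi> y - \<phi> s0\<bar> < \<bar>c\<bar>" if "\<bar>y - s0\<bar> < r" for y
          using d3 that r by (auto simp: dist_real_def)
        have lipc: "(Ct + \<bar>c\<bar> * 1)-lipschitz_on {0..L} (\<lambda>t. g t - c * t)"
          using lipschitz_on_diff[OF lipg lipschitz_on_cmult_real[OF lipschitz_on_id]] by simp
        have lipc2: "(\<bar>c\<bar> * 1 + Ct)-lipschitz_on {0..L} (\<lambda>t. c * t - g t)"
          using lipschitz_on_diff[OF lipschitz_on_cmult_real[OF lipschitz_on_id] lipg] by simp
        show False
        proof (cases "\<phi> s0 > 0")
          case True
          have cpos: "c > 0" using True by (simp add: c_def)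
          have sub: "{s0..s0 + r} \<subseteq> {0..L}" "{s0<..<s0 + r} \<subseteq> {s0 - r0<..<s0 + r0}"
            using r r0b ab s0ab by auto
          have "(\<lambda>t. g t - c * t) s0 \<le> (\<lambda>t. g t - c * t) (s0 + r)"
          proof (rule mono_ae[OF _ lipschitz_on_subset[OF lipc sub(1)]])
            show "s0 \<le> s0 + r" using r by simp
            show "AE t in lborel. t \<in> {s0<..<s0 + r} \<longrightarrow> (\<exists>d\<ge>0. ((\<lambda>t. g t - c * t) has_real_derivative d) (at t))"
              using AEphi
            proof (rule eventually_mono)
              fix y assume H: "y \<in> {s0 - r0<..<s0 + r0} \<longrightarrow> (g has_real_derivative \<phi> y) (at y) \<and> (\<phi> y)^2 = k^2 * (1 - (g y)^2)"
              show "y \<in> {s0<..<s0 + r} \<longrightarrow> (\<exists>d\<ge>0. ((\<lambda>t. g t - c * t) has_real_derivative d) (at y))"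
              proof
                assume y: "y \<in> {s0<..<s0 + r}"
                hence "(g has_real_derivative \<phi> y) (at y)" using H sub(2) by blast
                hence "((\<lambda>t. g t - c * t) has_real_derivative \<phi> y - c) (at y)"
                  by (auto intro!: derivative_eq_intros)
                moreover have "\<phi> y - c \<ge> 0"
                proof -
                  have h1: "\<bar>\<phi> y - \<phi> s0\<bar> < \<bar>c\<bar>" using phinear[of y] y by auto
                  have h2: "\<phi> s0 = 2*c" by (simp add: c_def)
                  have h3: "\<bar>c\<bar> = c" using cpos by simp
                  show ?thesis using h1 h2 h3 unfolding abs_less_iff by linarith
                qed
                ultimately show "\<exists>d\<ge>0. ((\<lambda>t. g t - c * t) has_real_derivative d) (at y)" by blast
              qed
            qed
          qed
          hence "g s0 + c * r \<le> g (s0 + r)" by (simp add: algebra_simps)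
          moreover have "g (s0 + r) \<le> g s0" using s0 r0b r by auto
          moreover have "c * r > 0" using cpos r(1) by simp
          ultimately show False by linarith
        next
          case False
          have cneg: "c < 0" using False phin0 by (simp add: c_def)
          have sub: "{s0 - r..s0} \<subseteq> {0..L}" "{s0 - r<..<s0} \<subseteq> {s0 - r0<..<s0 + r0}"
            using r r0b ab s0ab by auto
          have "(\<lambda>t. c * t - g t) (s0 - r) \<le> (\<lambda>t. c * t - g t) s0"
          proof (rule mono_ae[OF _ lipschitz_on_subset[OF lipc2 sub(1)]])
            show "s0 - r \<le> s0" using r by simp
            show "AE t in lborel. t \<in> {s0 - r<..<s0} \<longrightarrow> (\<exists>d\<ge>0. ((\<lambda>t. c * t - g t) has_real_derivative d) (at t))"
              using AEphi
            proof (rule eventually_mono)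
              fix y assume H: "y \<in> {s0 - r0<..<s0 + r0} \<longrightarrow> (g has_real_derivative \<phi> y) (at y) \<and> (\<phi> y)^2 = k^2 * (1 - (g y)^2)"
              show "y \<in> {s0 - r<..<s0} \<longrightarrow> (\<exists>d\<ge>0. ((\<lambda>t. c * t - g t) has_real_derivative d) (at y))"
              proof
                assume y: "y \<in> {s0 - r<..<s0}"
                hence "(g has_real_derivative \<phi> y) (at y)" using H sub(2) by blast
                hence "((\<lambda>t. c * t - g t) has_real_derivative c - \<phi> y) (at y)"
                  by (auto intro!: derivative_eq_intros)
                moreover have "c - \<phi> y \<ge> 0"
                proof -
                  have h1: "\<bar>\<phi> y - \<phi> s0\<bar> < \<bar>c\<bar>" using phinear[of y] y by auto
                  have h2: "\<phi> s0 = 2*c" by (simp add: c_def)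
                  have h3: "\<bar>c\<bar> = - c" using cneg by simp
                  show ?thesis using h1 h2 h3 unfolding abs_less_iff by linarith
                qed
                ultimately show "\<exists>d\<ge>0. ((\<lambda>t. c * t - g t) has_real_derivative d) (at y)" by blast
              qed
            qed
          qed
          hence "g s0 - c * r \<le> g (s0 - r)" by (simp add: algebra_simps)
          moreover have "g (s0 - r) \<le> g s0" using s0 r0b r by auto
          moreover have "c * r < 0" using cneg r(1) by (simp add: mult_neg_pos)
          ultimately show False by linarith
        qed
      qed
    qed
    then obtain s where s: "s \<in> {a..b}" "g s = 1" by blast
    have ts: "tau s = lam" using gpm[of s] s abL by auto
    have ta: "tau a = - lam" using gpm[of a] ga1 abL ab by auto
    have "tau s - tau a = 2 *\<^sub>R lam" using ts ta by (simp add: scaleR_2)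
    hence "norm (tau s - tau a) = 2" using lam by simp
    moreover have "norm (tau s - tau a) \<le> Ct * (s - a)"
      using lipschitz_onD[OF Ct, of s a] s abL ab by (auto simp: dist_norm dist_real_def)
    ultimately have "2 \<le> Ct * (s - a)" by simp
    also have "\<dots> \<le> (Ct + 1) * (s - a)" using s by (intro mult_right_mono) auto
    finally have "2 / (Ct + 1) \<le> s - a" using Ct0 by (simp add: field_simps)
    thus ?thesis using s unfolding ell_def by auto
  qed
  define S where "S = {0..L} - Z"
  have compC: "0 \<in> C \<or> L \<in> C \<or> (\<exists>a b. a < b \<and> C = {a<..<b} \<and> ell \<le> b - a \<and> 0 \<le> a \<and> b \<le> L)"
    if C: "C \<in> components S" for C
  proof (cases "0 \<in> C \<or> L \<in> C")
    case True
    thus ?thesis by blast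
  next
    case False
    have Cne: "C \<noteq> {}" and CS: "C \<subseteq> S" and Cconn: "connected C"
      and Cmax: "\<And>D. D \<noteq> {} \<Longrightarrow> C \<subseteq> D \<Longrightarrow> D \<subseteq> S \<Longrightarrow> connected D \<Longrightarrow> D = C"
      using C unfolding in_components_maximal by auto
    have Cint: "is_interval C" using Cconn by (simp add: is_interval_connected_1)
    have C0L: "C \<subseteq> {0..L}" using CS unfolding S_def by auto
    have bb: "bdd_below C" "bdd_above C"
      using C0L by (auto intro!: bdd_belowI[of _ 0] bdd_aboveI[of _ L])
    define a where "a = Inf C"
    define b where "b = Sup C"
    have aC: "a \<le> x" if "x \<in> C" for x using cInf_lower[OF that bb(1)] by (simp add: a_def)
    have Cb: "x \<le> b" if "x \<in> C" for x using cSup_upper[OF that bb(2)] by (simp add: b_def)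
    obtain x0 where x0: "x0 \<in> C" using Cne by blast
    have a0: "0 \<le> a" unfolding a_def using C0L Cne by (intro cInf_greatest) auto
    have aL: "a \<le> L" using aC[OF x0] C0L x0 by auto
    have bL: "b \<le> L" unfolding b_def using C0L Cne by (intro cSup_least) auto
    have b0: "0 \<le> b" using Cb[OF x0] C0L x0 by auto
    have aZ: "a \<in> Z"
    proof (rule ccontr)
      assume naZ: "a \<notin> Z"
      obtain \<epsilon> where \<epsilon>: "\<epsilon> > 0" "\<forall>y. \<bar>y - a\<bar> < \<epsilon> \<longrightarrow> y \<notin> Z" using ropen[OF naZ] by blast
      define e2 where "e2 = \<epsilon> / 2"
      have e2: "e2 > 0" "e2 < \<epsilon>" using \<epsilon>(1) by (simp_all add: e2_def)
      define l where "l = max 0 (a - e2)"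
      have l: "0 \<le> l" "a - e2 \<le> l" "l \<le> a" "l = 0 \<or> l = a - e2" using a0 e2 unfolding l_def by auto
      define D where "D = C \<union> {l..a}"
      have Dint: "is_interval D" unfolding D_def a_def using interval_extend_left[OF Cint Cne bb(1)] l(3) a_def by simp
      have DS: "D \<subseteq> S"
      proof
        fix y assume "y \<in> D"
        hence "y \<in> C \<or> y \<in> {l..a}" unfolding D_def by blast
        thus "y \<in> S"
        proof
          assume "y \<in> C" thus ?thesis using CS by blast
        next
          assume y: "y \<in> {l..a}"
          hence "0 \<le> y" "y \<le> L" "\<bar>y - a\<bar> < \<epsilon>" using l aL e2 by auto
          thus ?thesis using \<epsilon>(2) unfolding S_def by auto
        qed
      qed
      have Dne: "D \<noteq> {}" using Cne unfolding D_def by blast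
      have CD: "C \<subseteq> D" unfolding D_def by blast
      have Dc: "connected D" using Dint is_interval_connected_1 by blast
      have "D = C" by (rule Cmax[OF Dne CD DS Dc])
      moreover have "l \<in> D" using l(3) unfolding D_def by simp
      ultimately have lC: "l \<in> C" by simp
      hence "a \<le> l" by (rule aC)
      hence "l = a" using l(3) by simp
      hence "l = 0" using l(4) e2 by auto
      thus False using lC False by simp
    qed
    have bZ: "b \<in> Z"
    proof (rule ccontr)
      assume nbZ: "b \<notin> Z"
      obtain \<epsilon> where \<epsilon>: "\<epsilon> > 0" "\<forall>y. \<bar>y - b\<bar> < \<epsilon> \<longrightarrow> y \<notin> Z" using ropen[OF nbZ] by blast
      define e2 where "e2 = \<epsilon> / 2"
      have e2: "e2 > 0" "e2 < \<epsilon>" using \<epsilon>(1) by (simp_all add: e2_def)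
      define r where "r = min L (b + e2)"
      have r: "r \<le> L" "r \<le> b + e2" "b \<le> r" "r = L \<or> r = b + e2" using bL e2 unfolding r_def by auto
      define D where "D = C \<union> {b..r}"
      have Dint: "is_interval D" unfolding D_def b_def using interval_extend_right[OF Cint Cne bb(2)] r(3) b_def by simp
      have DS: "D \<subseteq> S"
      proof
        fix y assume "y \<in> D"
        hence "y \<in> C \<or> y \<in> {b..r}" unfolding D_def by blast
        thus "y \<in> S"
        proof
          assume "y \<in> C" thus ?thesis using CS by blast
        next
          assume y: "y \<in> {b..r}"
          hence "0 \<le> y" "y \<le> L" "\<bar>y - b\<bar> < \<epsilon>" using r b0 e2 by auto
          thus ?thesis using \<epsilon>(2) unfolding S_def by auto
        qed
      qed
      have Dne: "D \<noteq> {}" using Cne unfolding D_def by blast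
      have CD: "C \<subseteq> D" unfolding D_def by blast
      have Dc: "connected D" using Dint is_interval_connected_1 by blast
      have "D = C" by (rule Cmax[OF Dne CD DS Dc])
      moreover have "r \<in> D" using r(3) unfolding D_def by simp
      ultimately have rC: "r \<in> C" by simp
      hence "r \<le> b" by (rule Cb)
      hence "r = b" using r(3) by simp
      hence "r = L" using r(4) e2 by auto
      thus False using rC False by simp
    qed
    have sub1: "C \<subseteq> {a<..<b}"
    proof
      fix x assume x: "x \<in> C"
      have "x \<notin> Z" using x CS unfolding S_def by auto
      hence "x \<noteq> a" "x \<noteq> b" using aZ bZ by auto
      thus "x \<in> {a<..<b}" using aC[OF x] Cb[OF x] by auto
    qed
    have sub2: "{a<..<b} \<subseteq> C"
    proof
      fix x assume x: "x \<in> {a<..<b}"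
      obtain c1 where c1: "c1 \<in> C" "c1 < x" using cInf_lessD[OF Cne, of x] x unfolding a_def by auto
      obtain c2 where c2: "c2 \<in> C" "x < c2" using less_cSupD[OF Cne, of x] x unfolding b_def by auto
      show "x \<in> C" using Cint c1 c2 unfolding is_interval_1 by (meson less_imp_le)
    qed
    have Ceq: "C = {a<..<b}" using sub1 sub2 by blast
    have ab: "a < b" using sub1 x0 by auto
    have "{a<..<b} \<subseteq> S" using CS Ceq by simp
    hence free: "{a<..<b} \<inter> Z = {}" unfolding S_def by blast
    have ell: "ell \<le> b - a" by (rule endpoints[OF a0 ab bL aZ bZ free])
    have ex: "\<exists>a' b'. a' < b' \<and> C = {a'<..<b'} \<and> ell \<le> b' - a' \<and> 0 \<le> a' \<and> b' \<le> L"
      by (intro exI[of _ a] exI[of _ b] conjI ab Ceq a0 bL ell)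
    show ?thesis using ex by blast
  qed
  have fin: "finite (components S)"
  proof -
    define R where "R = {C \<in> components S. 0 \<notin> C \<and> L \<notin> C}"
    have c0: "C = connected_component_set S x" if Cc: "C \<in> components S" and xC: "x \<in> C" for C x
    proof -
      obtain y where y: "y \<in> S" "C = connected_component_set S y" using Cc components_iff by blast
      have "x \<in> connected_component_set S y" using xC y(2) by simp
      hence "connected_component_set S x = connected_component_set S y" by (rule connected_component_eq)
      thus ?thesis using y(2) by simp
    qed
    have "components S \<subseteq> {connected_component_set S 0, connected_component_set S L} \<union> R"
    proof
      fix C assume C: "C \<in> components S"
      show "C \<in> {connected_component_set S 0, connected_component_set S L} \<union> R"
      proof (cases "0 \<in> C")
        case True
        hence "C = connected_component_set S 0" by (rule c0[OF C])
        thus ?thesis by simp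
      next
        case False
        show ?thesis
        proof (cases "L \<in> C")
          case True
          hence "C = connected_component_set S L" by (rule c0[OF C])
          thus ?thesis by simp
        next
          case False2: False
          have "C \<in> R" unfolding R_def using C False False2 by simp
          thus ?thesis by simp
        qed
      qed
    qed
    moreover have "finite R"
    proof (rule finite_sep[OF lpos])
      show "\<exists>a b. a < b \<and> C = {a<..<b} \<and> ell \<le> b - a \<and> 0 \<le> a \<and> b \<le> L" if CR: "C \<in> R" for C
      proof -
        have "C \<in> components S" "0 \<notin> C" "L \<notin> C" using CR unfolding R_def by auto
        thus ?thesis using compC[of C] by blast
      qed
      show "C \<inter> D = {}" if CR: "C \<in> R" "D \<in> R" "C \<noteq> D" for C D
      proof -
        have "C \<in> components S" "D \<in> components S" using CR unfolding R_def by auto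
        thus ?thesis using components_nonoverlap CR(3) by blast
      qed
    qed
    hence "finite ({connected_component_set S 0, connected_component_set S L} \<union> R)" by simp
    ultimately show ?thesis by (rule finite_subset)
  qed
  show ?thesis using fin unfolding Seq S_def .
qed

end
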